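(* Let $f\in S_d(M,L,\alpha,R)$. For all $0<h<\frac{R}{2}$ and $\lambda\in\mathbb{R}$, the map $F_{\lambda,h}$ is a deformation retraction of $\mathcal{K}_{\lambda,h}$ onto $\mathcal{G}_{\lambda,h}$. Furthermore, $\mathcal{F}_{\lambda}^{h}\subset \mathcal{K}_{\lambda,h}\subset \mathcal{F}_{\lambda}^{2h}$ and $\mathcal{F}_{\lambda}\subset\mathcal{G}_{\lambda,h}\subset \mathcal{F}_{\lambda+L(1+3^{\alpha})h^{\alpha}}$.
   Context: $S_d(M,L,\alpha,R)$: functions $f:[0,1]^d\to\mathbb{R}$ with (A0) $|f|\le M$; (A1) disjoint open sets $M_1,\dots,M_l\subset[0,1]^d$ with $\bigcup_i\overline{M_i}=[0,1]^d$ and $|f(x)-f(y)|\le L\|x-y\|_2^\alpha$ for $x,y$ in a common $M_i$; (A2) $\liminf_{x\to x_0,x\in\bigcup_iM_i}f(x)=f(x_0)$ for all $x_0$; (A3) $\Gamma:=\bigcup_i\partial M_i\cap]0,1[^d$ is a $C^{1,1}$ hypersurface with reach at least $R$ and Hausdorff distance to $\partial[0,1]^d$ at least $R$ (reach: supremum of $r$ such that every point at distance $<r$ from $\Gamma$ has a unique nearest point in $\Gamma$). Notation: $\mathcal{F}_\lambda=f^{-1}(]-\infty,\lambda])$; $\operatorname{dist}(x,A)=\inf_{a\in A}\|x-a\|_2$; $A^b=\{x\in[0,1]^d:\operatorname{dist}(x,A)\le b\}$. For $x$ with $\operatorname{dist}(x,\Gamma)<R$, $\xi(x)$ denotes the unique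 nearest point of $\Gamma$ to $x$. $[x,y]$ is the line segment. $S_{\lambda,h}=\left(\Gamma^{h}\setminus\mathcal{F}_{\lambda+Lh^\alpha}\right)\cap\mathcal{F}_\lambda^h$; $\mathcal{K}_{\lambda,h}=\mathcal{F}_\lambda^h\cup\bigcup_{z\in S_{\lambda,h}}[z,\xi(z)]$. Condition (C1) for $x$: there exists $i$ with $x\in\left(\bigcup_{z\in S_{\lambda,h}}[z,\xi(z)]\right)\cap M_i$ and $\operatorname{dist}(\xi(x),M_i\cap\mathcal{F}_{\lambda+Lh^\alpha})\ge 2h-\|x-\xi(x)\|_2$. $F_{\lambda,h}:\mathcal{K}_{\lambda,h}\times[0,1]\to\mathcal{K}_{\lambda,h}$: if $x$ satisfies (C1) with index $i$, $F_{\lambda,h}(x,t)=(1-t)x+t\left(\xi(x)+\left(2h-\operatorname{dist}(\xi(x),M_i\cap\mathcal{F}_{\lambda+Lh^\alpha})\right)_+\frac{x-\xi(x)}{\|x-\xi(x)\|_2}\right)$; otherwise $F_{\lambda,h}(x,t)=x$. Here $(u)_+=\max(u,0)$. $\mathcal{G}_{\lambda,h}=\{F_{\lambda,h}(x,1):x\in\mathcal{K}_{\lambda,h}\}$. A deformation retraction of $X$ onto $A\subset X$ is a continuous $F:X\times[0,1]\to X$ with $F(x,0)=x$, $F(x,1)\in A$ for all $x\in X$, and $F(a,1)=a$ for all $a\in A$. *)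

theory Defs
  imports "HOL-Analysis.Analysis"
begin

text \<open>Ambient space: an arbitrary Euclidean space 'a with d = DIM('a);
  the unit cube [0,1]^d is cbox 0 One, its interior ]0,1[^d is box 0 One.\<close>

abbreviation cube :: "'a::euclidean_space set" where
  "cube \<equiv> cbox 0 One"

definition sdist :: "'a::euclidean_space \<Rightarrow> 'a set \<Rightarrow> ereal" where
  "sdist x A = (if A = {} then \<infinity> else ereal (infdist x A))"

definition thick :: "'a::euclidean_space set \<Rightarrow> real \<Rightarrow> 'a set" where
  "thick A b = {x \<in> cube. sdist x A \<le> ereal b}"

definition sublevel :: "('a::euclidean_space \<Rightarrow> real) \<Rightarrow> real \<Rightarrow> 'a set" where
  "sublevel f lam = {x \<in> cube. f x \<le> lam}"

definition Gam :: "'a::euclidean_space set set \<Rightarrow> 'a set" where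
  "Gam Ms = (\<Union>M\<in>Ms. frontier M) \<inter> box 0 One"

definition C11_hypersurface :: "'a::euclidean_space set \<Rightarrow> bool" where
  "C11_hypersurface S \<longleftrightarrow>
     (\<forall>p\<in>S. \<exists>U g gr K. open U \<and> p \<in> U \<and>
        (\<forall>x\<in>U. (g has_derivative (\<lambda>v. gr x \<bullet> v)) (at x)) \<and>
        (\<forall>x\<in>U. gr x \<noteq> 0) \<and>
        (\<forall>x\<in>U. \<forall>y\<in>U. norm (gr x - gr y) \<le> K * norm (x - y)) \<and>
        S \<inter> U = {x\<in>U. (g x :: real) = 0})"

text \<open>reach(S) >= R: every point at distance < R from S has a unique nearest point in S
  (equivalent to: the supremum of admissible r is at least R).\<close>
definition reach_ge :: "'a::euclidean_space set \<Rightarrow> real \<Rightarrow> bool" where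
  "reach_ge S R \<longleftrightarrow>
     (\<forall>x. sdist x S < ereal R \<longrightarrow> (\<exists>!y. y \<in> S \<and> dist x y = infdist x S))"

definition xi :: "'a::euclidean_space set \<Rightarrow> 'a \<Rightarrow> 'a" where
  "xi S x = (THE y. y \<in> S \<and> dist x y = infdist x S)"

text \<open>The class S_d(M,L,alpha,R), with the partition M_1..M_l given explicitly as
  the finite family Ms.\<close>
definition in_S ::
  "('a::euclidean_space \<Rightarrow> real) \<Rightarrow> 'a set set \<Rightarrow> real \<Rightarrow> real \<Rightarrow> real \<Rightarrow> real \<Rightarrow> bool" where
  "in_S f Ms Mb L \<alpha> R \<longleftrightarrow>
     0 < \<alpha> \<and> \<alpha> \<le> 1 \<and>
     (\<forall>x\<in>cube. \<bar>f x\<bar> \<le> Mb) \<and>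
     finite Ms \<and> (\<forall>M\<in>Ms. open M \<and> M \<subseteq> cube) \<and>
     (\<forall>M1\<in>Ms. \<forall>M2\<in>Ms. M1 \<noteq> M2 \<longrightarrow> M1 \<inter> M2 = {}) \<and>
     (\<Union>M\<in>Ms. closure M) = cube \<and>
     (\<forall>M\<in>Ms. \<forall>x\<in>M. \<forall>y\<in>M. \<bar>f x - f y\<bar> \<le> L * norm (x - y) powr \<alpha>) \<and>
     (\<forall>x0\<in>cube. Liminf (at x0 within (\<Union>Ms)) (\<lambda>x. ereal (f x)) = ereal (f x0)) \<and>
     C11_hypersurface (Gam Ms) \<and> reach_ge (Gam Ms) R \<and>
     (\<forall>x\<in>Gam Ms. infdist x (frontier cube) \<ge> R)"

definition Sset where
  "Sset f Ms L \<alpha> lam h =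
     (thick (Gam Ms) h - sublevel f (lam + L * h powr \<alpha>)) \<inter> thick (sublevel f lam) h"

definition segs where
  "segs f Ms L \<alpha> lam h = (\<Union>z\<in>Sset f Ms L \<alpha> lam h. closed_segment z (xi (Gam Ms) z))"

definition Kset where
  "Kset f Ms L \<alpha> lam h = thick (sublevel f lam) h \<union> segs f Ms L \<alpha> lam h"

definition C1 where
  "C1 f Ms L \<alpha> lam h M x \<longleftrightarrow> M \<in> Ms \<and> x \<in> segs f Ms L \<alpha> lam h \<inter> M \<and>
     sdist (xi (Gam Ms) x) (M \<inter> sublevel f (lam + L * h powr \<alpha>))
       \<ge> ereal (2 * h - norm (x - xi (Gam Ms) x))"

text \<open>(2h - dist(y, A))_+ with dist(y,{}) = infinity\<close>
definition pospart_term :: "real \<Rightarrow> 'a::euclidean_space \<Rightarrow> 'a set \<Rightarrow> real" where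
  "pospart_term h y A = (if A = {} then 0 else max (2 * h - infdist y A) 0)"

definition Fmap where
  "Fmap f Ms L \<alpha> lam h = (\<lambda>(x, t).
     if \<exists>M. C1 f Ms L \<alpha> lam h M x then
       (let M = (THE M. C1 f Ms L \<alpha> lam h M x); y = xi (Gam Ms) x in
         (1 - t) *\<^sub>R x + t *\<^sub>R (y + (pospart_term h y (M \<inter> sublevel f (lam + L * h powr \<alpha>))
                 / norm (x - y)) *\<^sub>R (x - y)))
     else x)"

definition Gset where
  "Gset f Ms L \<alpha> lam h = (\<lambda>x. Fmap f Ms L \<alpha> lam h (x, 1)) ` Kset f Ms L \<alpha> lam h"

definition deformation_retraction ::
  "'a::topological_space set \<Rightarrow> 'a set \<Rightarrow> ('a \<times> real \<Rightarrow> 'a) \<Rightarrow> bool" where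
  "deformation_retraction X A F \<longleftrightarrow>
     A \<subseteq> X \<and> continuous_on (X \<times> {0..1}) F \<and> F ` (X \<times> {0..1}) \<subseteq> X \<and>
     (\<forall>x\<in>X. F (x, 0) = x \<and> F (x, 1) \<in> A) \<and> (\<forall>a\<in>A. F (a, 1) = a)"

end

theory Submission
  imports Defs
begin

lemma connected_in_piece:
  assumes "connected S" "S \<subseteq> \<Union>Ms" "\<forall>M\<in>Ms. open M"
    "\<forall>M1\<in>Ms. \<forall>M2\<in>Ms. M1 \<noteq> M2 \<longrightarrow> M1 \<inter> M2 = {}" "Q \<in> Ms" "a \<in> S" "a \<in> Q"
  shows "S \<subseteq> Q"
proof -
  have o2: "open (\<Union>(Ms - {Q}))" using assms(3) by auto
  have oQ: "open Q" using assms(3,5) by blast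
  have d: "Q \<inter> \<Union>(Ms - {Q}) \<inter> S = {}"
  proof -
    { fix x assume "x \<in> Q" "x \<in> \<Union>(Ms - {Q})"
      then obtain M where "M \<in> Ms" "M \<noteq> Q" "x \<in> M" by auto
      then have False using assms(4,5) \<open>x \<in> Q\<close> by blast }
    then show ?thesis by blast
  qed
  have c: "S \<subseteq> Q \<union> \<Union>(Ms - {Q})" using assms(2) by blast
  have "Q \<inter> S = {} \<or> \<Union>(Ms - {Q}) \<inter> S = {}"
    using connectedD[OF assms(1) oQ o2 d c] .
  then show ?thesis using assms(6,7) c by blast
qed

lemma infdist_lessE:
  fixes x :: "'a::metric_space"
  assumes "A \<noteq> {}" "infdist x A < e"
  obtains a where "a \<in> A" "dist x a < e"
proof -
  have "Inf (dist x ` A) < e" using assms by (simp add: infdist_notempty)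
  then obtain d where "d \<in> dist x ` A" "d < e" using cInf_lessD[of "dist x ` A" e] assms(1) by blast
  then show ?thesis using that by blast
qed

locale setting =
  fixes f :: "'a::euclidean_space \<Rightarrow> real" and Ms :: "'a set set"
    and Mb L \<alpha> R h lam :: real
  assumes S: "in_S f Ms Mb L \<alpha> R" and hpos: "0 < h" and hR: "h < R / 2"
begin

abbreviation "Gm \<equiv> Gam Ms"
abbreviation "\<xi> \<equiv> xi Gm"

lemmas Sx = S[unfolded in_S_def]
lemmas S1 = Sx[THEN conjunct1]
lemmas S2 = Sx[THEN conjunct2, THEN conjunct1]
lemmas S4 = Sx[THEN conjunct2, THEN conjunct2, THEN conjunct2, THEN conjunct1]
lemmas S5 = Sx[THEN conjunct2, THEN conjunct2, THEN conjunct2, THEN conjunct2, THEN conjunct1]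
lemmas S6 = Sx[THEN conjunct2, THEN conjunct2, THEN conjunct2, THEN conjunct2, THEN conjunct2, THEN conjunct1]
lemmas S7 = Sx[THEN conjunct2, THEN conjunct2, THEN conjunct2, THEN conjunct2, THEN conjunct2, THEN conjunct2, THEN conjunct1]
lemmas S8 = Sx[THEN conjunct2, THEN conjunct2, THEN conjunct2, THEN conjunct2, THEN conjunct2, THEN conjunct2, THEN conjunct2, THEN conjunct1]
lemmas S9 = Sx[THEN conjunct2, THEN conjunct2, THEN conjunct2, THEN conjunct2, THEN conjunct2, THEN conjunct2, THEN conjunct2, THEN conjunct2, THEN conjunct1]
lemmas S10 = Sx[THEN conjunct2, THEN conjunct2, THEN conjunct2, THEN conjunct2, THEN conjunct2, THEN conjunct2, THEN conjunct2, THEN conjunct2, THEN conjunct2, THEN conjunct1]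
lemmas S11 = Sx[THEN conjunct2, THEN conjunct2, THEN conjunct2, THEN conjunct2, THEN conjunct2, THEN conjunct2, THEN conjunct2, THEN conjunct2, THEN conjunct2, THEN conjunct2, THEN conjunct1]
lemmas S12 = Sx[THEN conjunct2, THEN conjunct2, THEN conjunct2, THEN conjunct2, THEN conjunct2, THEN conjunct2, THEN conjunct2, THEN conjunct2, THEN conjunct2, THEN conjunct2, THEN conjunct2]

lemma alpha: "0 < \<alpha>" "\<alpha> \<le> 1" using S1 S2 by auto
lemma finMs: "finite Ms" using S4 .
lemma openM: "M \<in> Ms \<Longrightarrow> open M" using S5 by auto
lemma Mcube: "M \<in> Ms \<Longrightarrow> M \<subseteq> cube" using S5 by auto
lemma disj: "M1 \<in> Ms \<Longrightarrow> M2 \<in> Ms \<Longrightarrow> M1 \<noteq> M2 \<Longrightarrow> M1 \<inter> M2 = {}" using S6 by auto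
lemma cover: "(\<Union>M\<in>Ms. closure M) = cube" using S7 .
lemma hold: "M \<in> Ms \<Longrightarrow> x \<in> M \<Longrightarrow> y \<in> M \<Longrightarrow> f x \<le> f y + L * norm (x - y) powr \<alpha>"
proof -
  assume a: "M \<in> Ms" "x \<in> M" "y \<in> M"
  have "\<bar>f x - f y\<bar> \<le> L * norm (x - y) powr \<alpha>" using S8 a by blast
  then show ?thesis by linarith
qed
lemma liminf: "x0 \<in> cube \<Longrightarrow> Liminf (at x0 within (\<Union>Ms)) (\<lambda>x. ereal (f x)) = ereal (f x0)"
  using S9 by blast
lemma c11: "C11_hypersurface Gm" using S10 .
lemma reach: "reach_ge Gm R" using S11 .
lemma bdist: "x \<in> Gm \<Longrightarrow> infdist x (frontier cube) \<ge> R" using S12 by blast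

lemma Rpos: "R > 0" using hpos hR by auto

lemma Mbox: "M \<in> Ms \<Longrightarrow> M \<subseteq> box 0 One"
  using interior_maximal[OF Mcube openM] by (simp add: interior_cbox)

lemma Gbox: "Gm \<subseteq> box 0 One" unfolding Gam_def by auto

lemma Gm_notin: "x \<in> Gm \<Longrightarrow> M \<in> Ms \<Longrightarrow> x \<notin> M"
proof
  assume x: "x \<in> Gm" and M: "M \<in> Ms" and xM: "x \<in> M"
  then obtain M' where M': "M' \<in> Ms" "x \<in> frontier M'" unfolding Gam_def by auto
  show False
  proof (cases "M = M'")
    case True then show False using M' xM openM[OF M] by (simp add: frontier_def interior_open)
  next
    case False
    then have "M \<inter> M' = {}" using disj M M' by auto
    then have "M \<inter> closure M' = {}" using open_Int_closure_eq_empty openM M by blast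
    moreover have "x \<in> closure M'" using M'(2) by (simp add: frontier_def)
    ultimately show False using xM by blast
  qed
qed

lemma box_cover: "x \<in> box 0 One \<Longrightarrow> x \<notin> Gm \<Longrightarrow> \<exists>M\<in>Ms. x \<in> M"
proof -
  assume x: "x \<in> box 0 One" "x \<notin> Gm"
  then have "x \<in> cube" using box_subset_cbox by blast
  then obtain M where M: "M \<in> Ms" "x \<in> closure M" using cover by auto
  show ?thesis
  proof (rule ccontr)
    assume "\<not> ?thesis"
    then have "x \<notin> M" using M by auto
    then have "x \<in> frontier M" using M openM by (simp add: frontier_def interior_open)
    then have "x \<in> Gm" using x(1) M(1) unfolding Gam_def by blast
    then show False using x by blast
  qed
qed

lemma L_nonneg: "L \<ge> 0"
proof -
  have "(0::'a) \<in> cube" by (simp add: mem_box)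
  then obtain M where M: "M \<in> Ms" "0 \<in> closure M" using cover by auto
  then have "M \<noteq> {}" by auto
  then obtain a where a: "a \<in> M" by blast
  then obtain e where e: "e > 0" "ball a e \<subseteq> M" using openM[OF M(1)] openE by blast
  obtain v :: 'a where v: "norm v = e/2" using vector_choose_size[of "e/2"] e by (auto simp: less_eq_real_def)
  have "dist a (a + v) < e" using e v by (simp add: dist_norm)
  then have b: "a + v \<in> M" using e(2) by auto
  have 1: "f a \<le> f (a+v) + L * norm v powr \<alpha>" using hold[OF M(1) a b] by simp
  have 2: "f (a+v) \<le> f a + L * norm v powr \<alpha>" using hold[OF M(1) b a] by simp
  have "norm v > 0" using v e by linarith
  then have "norm v powr \<alpha> > 0" by simp
  moreover have "0 \<le> L * norm v powr \<alpha>" using 1 2 by linarith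
  ultimately show ?thesis using mult_neg_pos[of L "norm v powr \<alpha>"] by linarith
qed

lemma seg_dist: "x \<in> closed_segment a b \<Longrightarrow> dist a b = dist a x + dist x (b::'a)"
  using between between_mem_segment by blast

lemma Gclosed: "closed Gm"
proof -
  have cl: "closed (\<Union>M\<in>Ms. frontier M)" using finMs by (intro closed_UN) auto
  have "closure Gm \<subseteq> Gm"
  proof
    fix x assume x: "x \<in> closure Gm"
    have "Gm \<subseteq> (\<Union>M\<in>Ms. frontier M)" unfolding Gam_def by blast
    then have "closure Gm \<subseteq> (\<Union>M\<in>Ms. frontier M)" using cl closure_minimal by blast
    then have x1: "x \<in> (\<Union>M\<in>Ms. frontier M)" using x by blast
    then obtain M where M: "M \<in> Ms" "x \<in> frontier M" by blast
    have "closure M \<subseteq> cube" using Mcube[OF M(1)] closure_minimal closed_cbox by blast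
    then have xc: "x \<in> cube" using M(2) frontier_def by (metis Diff_iff subsetD)
    show "x \<in> Gm"
    proof (rule ccontr)
      assume "x \<notin> Gm"
      then have "x \<notin> box 0 One" using x1 unfolding Gam_def by blast
      then have xf: "x \<in> frontier cube" using xc by (simp add: frontier_cbox)
      obtain y where y: "y \<in> Gm" "dist y x < R" using x Rpos closure_approachable by metis
      have "infdist y (frontier cube) \<le> dist y x" using xf by (rule infdist_le)
      then show False using bdist[OF y(1)] y(2) by linarith
    qed
  qed
  then show ?thesis using closure_subset_eq by blast
qed

lemma sdist_ne: "A \<noteq> {} \<Longrightarrow> sdist x A = ereal (infdist x A)"
  unfolding sdist_def by simp

lemma nearest:
  assumes "Gm \<noteq> {}" "infdist x Gm < R"
  shows "\<xi> x \<in> Gm" "dist x (\<xi> x) = infdist x Gm"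
proof -
  have "\<exists>!y. y \<in> Gm \<and> dist x y = infdist x Gm"
    using reach assms unfolding reach_ge_def by (simp add: sdist_ne)
  then have "\<xi> x \<in> Gm \<and> dist x (\<xi> x) = infdist x Gm"
    unfolding xi_def by (rule theI')
  then show "\<xi> x \<in> Gm" "dist x (\<xi> x) = infdist x Gm" by auto
qed

lemma nearest_unique:
  assumes "Gm \<noteq> {}" "infdist x Gm < R" "y \<in> Gm" "dist x y = infdist x Gm"
  shows "y = \<xi> x"
proof -
  have "\<exists>!y. y \<in> Gm \<and> dist x y = infdist x Gm"
    using reach assms unfolding reach_ge_def by (simp add: sdist_ne)
  then show ?thesis using nearest[OF assms(1,2)] assms(3,4) by blast
qed

lemma xi_Gm: "y \<in> Gm \<Longrightarrow> \<xi> y = y"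
proof -
  assume y: "y \<in> Gm"
  then have "Gm \<noteq> {}" by auto
  moreover have "infdist y Gm < R" using y Rpos by simp
  ultimately show ?thesis using nearest_unique[of y y] y by simp
qed

lemma seg_xi:
  assumes ne: "Gm \<noteq> {}" and zR: "infdist z Gm < R" and x: "x \<in> closed_segment z (\<xi> z)"
  shows "infdist x Gm = dist x (\<xi> z)" "\<xi> x = \<xi> z" "infdist x Gm \<le> infdist z Gm"
proof -
  have n1: "\<xi> z \<in> Gm" and n2: "dist z (\<xi> z) = infdist z Gm" using nearest[OF ne zR] by auto
  have sd: "dist z (\<xi> z) = dist z x + dist x (\<xi> z)" using seg_dist[OF x] .
  have "dist x (\<xi> z) \<le> dist x q" if q: "q \<in> Gm" for q
  proof -
    have "infdist z Gm \<le> dist z q" using q by (rule infdist_le)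
    also have "\<dots> \<le> dist z x + dist x q" by (rule dist_triangle)
    finally show ?thesis using n2 sd by linarith
  qed
  then have "dist x (\<xi> z) \<le> infdist x Gm"
    using ne by (simp add: infdist_notempty cINF_greatest)
  moreover have "infdist x Gm \<le> dist x (\<xi> z)" using n1 by (rule infdist_le)
  ultimately show e: "infdist x Gm = dist x (\<xi> z)" by linarith
  show "infdist x Gm \<le> infdist z Gm" using e sd n2 zero_le_dist[of z x] by linarith
  then have "infdist x Gm < R" using zR by linarith
  then show "\<xi> x = \<xi> z" using nearest_unique[OF ne _ n1] e by simp
qed

lemma xi_cont: assumes ne: "Gm \<noteq> {}" shows "continuous_on {x. infdist x Gm < R} \<xi>"
proof -
  let ?V = "{x. infdist x Gm < R}"
  have oV: "open ?V" by (intro open_Collect_less continuous_intros)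
  have loc: "continuous_on (?V \<inter> ball x0 1) \<xi>" for x0
  proof -
    let ?S = "?V \<inter> ball x0 1" and ?T = "Gm \<inter> cball x0 (R+1)"
    have "compact (cball x0 (R+1) \<inter> Gm)" by (rule compact_Int_closed[OF compact_cball Gclosed])
    then have cT: "compact ?T" by (simp add: Int_commute)
    have im: "\<xi> \<in> ?S \<rightarrow> ?T"
    proof
      fix x assume x: "x \<in> ?S"
      have "dist x0 (\<xi> x) \<le> dist x0 x + dist x (\<xi> x)" by (rule dist_triangle)
      also have "\<dots> \<le> R + 1" using x nearest[OF ne, of x] by simp
      finally show "\<xi> x \<in> ?T" using x nearest[OF ne, of x] by simp
    qed
    have eq: "(\<lambda>x. Pair x (\<xi> x)) ` ?S = (?S \<times> ?T) \<inter> (\<lambda>p. dist (fst p) (snd p) - infdist (fst p) Gm) -` {0}"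
    proof
      show "(\<lambda>x. Pair x (\<xi> x)) ` ?S \<subseteq> (?S \<times> ?T) \<inter> (\<lambda>p. dist (fst p) (snd p) - infdist (fst p) Gm) -` {0}"
      proof
        fix p assume "p \<in> (\<lambda>x. Pair x (\<xi> x)) ` ?S"
        then obtain x where x: "x \<in> ?S" "p = (x, \<xi> x)" by blast
        have "\<xi> x \<in> ?T" using im x(1) by blast
        moreover have "dist x (\<xi> x) - infdist x Gm = 0" using nearest[OF ne, of x] x(1) by simp
        ultimately show "p \<in> (?S \<times> ?T) \<inter> (\<lambda>p. dist (fst p) (snd p) - infdist (fst p) Gm) -` {0}"
          using x by simp
      qed
      show "(?S \<times> ?T) \<inter> (\<lambda>p. dist (fst p) (snd p) - infdist (fst p) Gm) -` {0} \<subseteq> (\<lambda>x. Pair x (\<xi> x)) ` ?S"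
      proof
        fix p assume p: "p \<in> (?S \<times> ?T) \<inter> (\<lambda>p. dist (fst p) (snd p) - infdist (fst p) Gm) -` {0}"
        have a1: "fst p \<in> ?S" "snd p \<in> Gm" "dist (fst p) (snd p) - infdist (fst p) Gm = 0"
          using p by (auto simp: mem_Times_iff)
        have a2: "infdist (fst p) Gm < R" using a1(1) by simp
        have sp: "snd p = \<xi> (fst p)" using nearest_unique[OF ne a2 a1(2)] a1(3) by simp
        have "p = (fst p, \<xi> (fst p))" using sp by (simp add: prod_eq_iff)
        then show "p \<in> (\<lambda>x. Pair x (\<xi> x)) ` ?S" using image_eqI[OF _ a1(1), of p "\<lambda>x. Pair x (\<xi> x)"] by blast
      qed
    qed
    have c: "continuous_on (?S \<times> ?T) (\<lambda>p. dist (fst p) (snd p) - infdist (fst p) Gm)"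
      by (intro continuous_on_diff continuous_on_dist continuous_on_fst continuous_on_snd continuous_on_id continuous_on_infdist)
    have "closedin (top_of_set (?S \<times> ?T)) ((?S \<times> ?T) \<inter> (\<lambda>p. dist (fst p) (snd p) - infdist (fst p) Gm) -` {0})"
      by (rule continuous_closedin_preimage[OF c closed_singleton])
    then show ?thesis using continuous_closed_graph_eq[OF cT im] eq by simp
  qed
  have "continuous_on (\<Union>x0\<in>?V. ?V \<inter> ball x0 1) \<xi>"
    by (rule continuous_on_open_UN) (use oV loc in auto)
  moreover have "(\<Union>x0\<in>?V. ?V \<inter> ball x0 1) = ?V" by auto
  ultimately show ?thesis by simp
qed

lemma mvt_line:
  fixes g :: "'b::euclidean_space \<Rightarrow> real"
  assumes sub: "closed_segment a b \<subseteq> U" and dg: "\<forall>x\<in>U. (g has_derivative (\<lambda>v. gr x \<bullet> v)) (at x)"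
  shows "\<exists>z\<in>closed_segment a b. g b - g a = gr z \<bullet> (b - a)"
proof -
  define l where "l = (\<lambda>t::real. a + t *\<^sub>R (b - a))"
  have lseg: "l t \<in> closed_segment a b" if "0 \<le> t" "t \<le> 1" for t
  proof -
    have "l t = (1 - t) *\<^sub>R a + t *\<^sub>R b" unfolding l_def by (simp add: algebra_simps)
    then show ?thesis using that unfolding closed_segment_def by blast
  qed
  have der: "((\<lambda>t. g (l t)) has_derivative (\<lambda>s. gr (l t) \<bullet> (s *\<^sub>R (b - a)))) (at t within {0..1})"
    if "0 \<le> t" "t \<le> 1" for t
  proof -
    have d1: "(l has_derivative (\<lambda>s. s *\<^sub>R (b - a))) (at t within {0..1})"
      unfolding l_def by (auto intro!: derivative_eq_intros)
    have d2: "(g has_derivative (\<lambda>v. gr (l t) \<bullet> v)) (at (l t))"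
      using dg sub lseg[OF that] by blast
    show ?thesis using has_derivative_compose[OF d1 d2] by simp
  qed
  obtain t where t: "t \<in> {0..1}" "g (l 1) - g (l 0) = gr (l t) \<bullet> ((1 - 0) *\<^sub>R (b - a))"
    using mvt_very_simple[of 0 1 "\<lambda>t. g (l t)" "\<lambda>t s. gr (l t) \<bullet> (s *\<^sub>R (b - a))"] der by force
  have "l 1 = b" "l 0 = a" unfolding l_def by auto
  then show ?thesis using t lseg[of t] by auto
qed

lemma seg_piece:
  assumes M: "M \<in> Ms" and a: "a \<in> M" and sub: "closed_segment a b \<subseteq> box 0 One - Gm"
  shows "closed_segment a b \<subseteq> M"
proof -
  have "closed_segment a b \<subseteq> \<Union>Ms" using sub box_cover by blast
  then show ?thesis
    using connected_in_piece[of "closed_segment a b" Ms M a] M a openM disj by auto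
qed

lemma box_convex_seg: "a \<in> box 0 One \<Longrightarrow> b \<in> box 0 One \<Longrightarrow> closed_segment a b \<subseteq> box 0 One"
  by (simp add: closed_segment_subset convex_box)

lemma seg_to_xi:
  assumes M: "M \<in> Ms" and x: "x \<in> M" and ne: "Gm \<noteq> {}" and xR: "infdist x Gm < R"
    and y: "y \<in> closed_segment x (\<xi> x)" and yne: "y \<noteq> \<xi> x"
  shows "y \<in> M"
proof -
  have n1: "\<xi> x \<in> Gm" using nearest[OF ne xR] by simp
  have xb: "x \<in> box 0 One" using Mbox M x by blast
  have "closed_segment x y \<subseteq> box 0 One - Gm"
  proof
    fix w assume w: "w \<in> closed_segment x y"
    have yx: "closed_segment x y \<subseteq> closed_segment x (\<xi> x)" using y by (simp add: subset_closed_segment)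
    then have w2: "w \<in> closed_segment x (\<xi> x)" using w by blast
    have "w \<in> box 0 One" using box_convex_seg[OF xb] Gbox n1 w2 by blast
    moreover have "w \<noteq> \<xi> x"
    proof
      assume "w = \<xi> x"
      then have "dist x y = dist x (\<xi> x) + dist (\<xi> x) y" using seg_dist w by metis
      moreover have "dist x (\<xi> x) = dist x y + dist y (\<xi> x)" using seg_dist y by metis
      ultimately have "dist y (\<xi> x) = 0" by (simp add: dist_commute)
      then show False using yne by simp
    qed
    moreover have "infdist w Gm = dist w (\<xi> x)" using seg_xi(1)[OF ne xR w2] .
    ultimately show "w \<in> box 0 One - Gm" by auto
  qed
  then show ?thesis using seg_piece[OF M x] by auto
qed

lemma local_sides:
  assumes p: "p \<in> Gm"
  shows "\<exists>r>0. \<forall>Q\<in>Ms. Q \<inter> ball p r \<noteq> {} \<longrightarrow> (\<forall>c\<in>Gm \<inter> ball p r. c \<in> closure Q)"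
proof -
  obtain U g gr K where U: "open U" "p \<in> U"
    and dg: "\<forall>x\<in>U. (g has_derivative (\<lambda>v. gr x \<bullet> v)) (at x)"
    and nz: "\<forall>x\<in>U. gr x \<noteq> 0"
    and lip: "\<forall>x\<in>U. \<forall>y\<in>U. norm (gr x - gr y) \<le> K * norm (x - y)"
    and GU: "Gm \<inter> U = {x\<in>U. (g x :: real) = 0}"
  proof -
    have "\<exists>U g gr K. open U \<and> p \<in> U \<and>
        (\<forall>x\<in>U. (g has_derivative (\<lambda>v. gr x \<bullet> v)) (at x)) \<and>
        (\<forall>x\<in>U. gr x \<noteq> 0) \<and>
        (\<forall>x\<in>U. \<forall>y\<in>U. norm (gr x - gr y) \<le> K * norm (x - y)) \<and>
        Gm \<inter> U = {x\<in>U. (g x :: real) = 0}"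
      using c11 p unfolding C11_hypersurface_def by (rule bspec)
    then obtain U g gr K where H: "open U \<and> p \<in> U \<and>
        (\<forall>x\<in>U. (g has_derivative (\<lambda>v. gr x \<bullet> v)) (at x)) \<and>
        (\<forall>x\<in>U. gr x \<noteq> 0) \<and>
        (\<forall>x\<in>U. \<forall>y\<in>U. norm (gr x - gr y) \<le> K * norm (x - y)) \<and>
        Gm \<inter> U = {x\<in>U. (g x :: real) = 0}" by (elim exE)
    then show ?thesis using that by (elim conjE)
  qed
  define m where "m = norm (gr p)"
  have m: "m > 0" using nz U(2) m_def by simp
  define n where "n = (1/m) *\<^sub>R gr p"
  have nn: "norm n = 1" using m unfolding n_def m_def by simp
  have gpn: "gr p \<bullet> n = m" using m unfolding n_def m_def by (simp add: power2_norm_eq_inner[symmetric] power2_eq_square)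
  define K1 where "K1 = max K 1"
  have K1: "K1 \<ge> 1" "K \<le> K1" unfolding K1_def by auto
  have pb: "p \<in> box 0 One" using p Gbox by blast
  have "open (U \<inter> box 0 One)" using U(1) by auto
  then obtain d0 where d0: "d0 > 0" "ball p d0 \<subseteq> U \<inter> box 0 One" using U(2) pb openE by blast
  define d1 where "d1 = min d0 (m / (4*K1))"
  have d1: "d1 > 0" using d0 m K1 unfolding d1_def by auto
  have d1b: "ball p d1 \<subseteq> U \<inter> box 0 One" using d0 unfolding d1_def by auto
  have d1K: "K1 * d1 \<le> m/4"
  proof -
    have "d1 \<le> m / (4*K1)" unfolding d1_def by simp
    then have "K1 * d1 \<le> K1 * (m / (4*K1))" using K1 by (intro mult_left_mono) auto
    also have "\<dots> = m/4" using K1 by simp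
    finally show ?thesis .
  qed
  define r where "r = d1/6"
  have r: "r > 0" using d1 unfolding r_def by simp
  have B: "gr x \<bullet> n \<ge> 3*m/4 \<and> norm (gr x) \<le> 5*m/4" if x: "x \<in> ball p d1" for x
  proof -
    have xU: "x \<in> U" using x d1b by blast
    have "norm (gr x - gr p) \<le> K * norm (x - p)" using lip xU U(2) by blast
    also have "\<dots> \<le> K1 * norm (x - p)" using K1 by (intro mult_right_mono) auto
    also have "\<dots> \<le> K1 * d1" using x K1 by (intro mult_left_mono) (auto simp: dist_norm norm_minus_commute)
    finally have nd: "norm (gr x - gr p) \<le> m/4" using d1K by linarith
    have "\<bar>(gr x - gr p) \<bullet> n\<bar> \<le> norm (gr x - gr p) * norm n" by (rule Cauchy_Schwarz_ineq2)
    then have "\<bar>(gr x - gr p) \<bullet> n\<bar> \<le> m/4" using nn nd by simp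
    moreover have "gr x \<bullet> n = gr p \<bullet> n + (gr x - gr p) \<bullet> n" by (simp add: inner_diff_left)
    ultimately have 1: "gr x \<bullet> n \<ge> 3*m/4" using gpn by linarith
    have "norm (gr x) \<le> norm (gr p) + norm (gr x - gr p)" by (rule norm_triangle_sub)
    then have 2: "norm (gr x) \<le> 5*m/4" using nd m_def by linarith
    show ?thesis using 1 2 by simp
  qed
  have mvt: "\<exists>z\<in>ball p d1. g b - g a = gr z \<bullet> (b - a)" if "a \<in> ball p d1" "b \<in> ball p d1" for a b
  proof -
    have s: "closed_segment a b \<subseteq> ball p d1" using that by (simp add: closed_segment_subset)
    then have "closed_segment a b \<subseteq> U" using d1b by blast
    then obtain z where "z \<in> closed_segment a b" "g b - g a = gr z \<bullet> (b - a)" using mvt_line dg by blast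
    then show ?thesis using s by blast
  qed
  have g0: "g c = 0" if "c \<in> Gm" "c \<in> ball p d1" for c
    using that GU d1b by blast
  have notG: "x \<notin> Gm" if "x \<in> ball p d1" "g x \<noteq> 0" for x
    using that GU d1b by blast
  define P where "P = (\<lambda>(\<sigma>::real) b. closed_segment b (b + (4*r*\<sigma>) *\<^sub>R n) \<union> closed_segment (b + (4*r*\<sigma>) *\<^sub>R n) (p + (4*r*\<sigma>) *\<^sub>R n))"
  have Pgood: "P \<sigma> b \<subseteq> box 0 One - Gm" "connected (P \<sigma> b)" "b \<in> P \<sigma> b" "p + (4*r*\<sigma>) *\<^sub>R n \<in> P \<sigma> b"
    if sg: "\<sigma> = 1 \<or> \<sigma> = -1" and b: "b \<in> ball p r" and gb: "\<sigma> * g b > 0" for \<sigma> b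
  proof -
    have s2: "\<sigma> * \<sigma> = 1" "\<bar>\<sigma>\<bar> = 1" using sg by auto
    have nsn: "norm ((4*r*\<sigma>) *\<^sub>R n) = 4*r" using nn s2 r by (simp add: abs_mult)
    have db: "dist p b < r" using b by simp
    have part1: "x \<in> ball p d1 \<and> \<sigma> * g x > 0" if x: "x \<in> closed_segment b (b + (4*r*\<sigma>) *\<^sub>R n)" for x
    proof -
      obtain u where u: "0 \<le> u" "u \<le> 1" "x = (1 - u) *\<^sub>R b + u *\<^sub>R (b + (4*r*\<sigma>) *\<^sub>R n)"
        using x unfolding closed_segment_def by blast
      have xe: "x = b + (4*r*\<sigma>*u) *\<^sub>R n" using u(3) by (simp add: algebra_simps)
      have "dist p x \<le> dist p b + dist b x" by (rule dist_triangle)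
      also have "dist b x = 4*r*u" using xe nn s2 r u by (simp add: dist_norm abs_mult)
      finally have dpx: "dist p x \<le> dist p b + 4*r*u" .
      have "4*r*u \<le> 4*r" using u r by (simp add: mult_left_le)
      then have "dist p x < 5 * r" using dpx db by linarith
      then have xb: "x \<in> ball p d1" using r_def d1 by simp
      have bb: "b \<in> ball p d1" using db r_def d1 by simp
      obtain z where z: "z \<in> ball p d1" "g x - g b = gr z \<bullet> (x - b)" using mvt[OF bb xb] by blast
      have "\<sigma> * (g x - g b) = (4*r*u) * (\<sigma> * \<sigma>) * (gr z \<bullet> n)" using z(2) xe by (simp add: algebra_simps)
      also have "\<dots> \<ge> 0" using s2 B[OF z(1)] r u m by simp
      finally show ?thesis using gb xb by (simp add: algebra_simps)
    qed
    have part2: "x \<in> ball p d1 \<and> \<sigma> * g x > 0" if x: "x \<in> closed_segment (b + (4*r*\<sigma>) *\<^sub>R n) (p + (4*r*\<sigma>) *\<^sub>R n)" for x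
    proof -
      obtain u where u: "0 \<le> u" "u \<le> 1" "x = (1 - u) *\<^sub>R (b + (4*r*\<sigma>) *\<^sub>R n) + u *\<^sub>R (p + (4*r*\<sigma>) *\<^sub>R n)"
        using x unfolding closed_segment_def by blast
      have xe: "x - p = (4*r*\<sigma>) *\<^sub>R n + (1 - u) *\<^sub>R (b - p)" using u(3) by (simp add: algebra_simps)
      have nb: "norm ((1 - u) *\<^sub>R (b - p)) \<le> r"
      proof -
        have "norm ((1 - u) *\<^sub>R (b - p)) = (1 - u) * norm (b - p)" using u by simp
        also have "\<dots> \<le> norm (b - p)" using u by (simp add: mult_left_le_one_le)
        finally show ?thesis using db by (simp add: dist_norm norm_minus_commute)
      qed
      have "norm (x - p) \<le> 4*r + r" using xe nsn nb norm_triangle_ineq[of "(4*r*\<sigma>) *\<^sub>R n" "(1 - u) *\<^sub>R (b - p)"] by simp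
      then have xb: "x \<in> ball p d1" using r_def r d1 by (simp add: dist_norm norm_minus_commute)
      have pb1: "p \<in> ball p d1" using d1 by simp
      obtain z where z: "z \<in> ball p d1" "g x - g p = gr z \<bullet> (x - p)" using mvt[OF pb1 xb] by blast
      have gp: "g p = 0" using g0 p pb1 by blast
      define A where "A = gr z \<bullet> n"
      define Bv where "Bv = gr z \<bullet> ((1 - u) *\<^sub>R (b - p))"
      have e0: "g x = gr z \<bullet> (x - p)" using z(2) gp by simp
      have e1: "gr z \<bullet> (x - p) = (4*r*\<sigma>) * A + Bv" unfolding xe A_def Bv_def by (simp only: inner_add_right inner_scaleR_right)
      have e: "\<sigma> * g x = (4*r) * (\<sigma> * \<sigma>) * (gr z \<bullet> n) + \<sigma> * (gr z \<bullet> ((1 - u) *\<^sub>R (b - p)))"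
        unfolding e0 e1 A_def[symmetric] Bv_def[symmetric] by (simp add: algebra_simps)
      have "\<bar>gr z \<bullet> ((1 - u) *\<^sub>R (b - p))\<bar> \<le> norm (gr z) * norm ((1 - u) *\<^sub>R (b - p))" by (rule Cauchy_Schwarz_ineq2)
      also have "\<dots> \<le> (5*m/4) * r" using B[OF z(1)] nb m by (intro mult_mono) auto
      finally have "\<bar>\<sigma> * (gr z \<bullet> ((1 - u) *\<^sub>R (b - p)))\<bar> \<le> (5*m/4) * r" using s2 by (simp add: abs_mult)
      moreover have "(4*r) * (\<sigma> * \<sigma>) * (gr z \<bullet> n) \<ge> (4*r) * (3*m/4)" using s2 B[OF z(1)] r by simp
      moreover have "(4*r) * (3*m/4) = 3*m*r" by simp
      ultimately have "\<sigma> * g x \<ge> 3*m*r - (5*m/4) * r" using e by linarith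
      moreover have "3*m*r - (5*m/4) * r > 0" using m r by simp
      ultimately show ?thesis using xb by linarith
    qed
    show "P \<sigma> b \<subseteq> box 0 One - Gm"
    proof
      fix x assume "x \<in> P \<sigma> b"
      then have "x \<in> ball p d1 \<and> \<sigma> * g x > 0" using part1 part2 unfolding P_def by auto
      moreover then have "g x \<noteq> 0" by auto
      ultimately show "x \<in> box 0 One - Gm" using notG d1b by blast
    qed
    show "connected (P \<sigma> b)" unfolding P_def by (intro connected_Un) auto
    show "b \<in> P \<sigma> b" "p + (4*r*\<sigma>) *\<^sub>R n \<in> P \<sigma> b" unfolding P_def by auto
  qed
  have main: "c \<in> closure Q" if Q: "Q \<in> Ms" "Q \<inter> ball p r \<noteq> {}" and c: "c \<in> Gm \<inter> ball p r" for Q c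
  proof -
    obtain a where a: "a \<in> Q" "a \<in> ball p r" using Q by blast
    have ab: "a \<in> ball p d1" using a r_def r d1 by auto
    have "a \<notin> Gm" using Gm_notin Q(1) a(1) by blast
    then have ga: "g a \<noteq> 0" using g0[of a] ab GU d1b by blast
    define \<sigma> :: real where "\<sigma> = (if g a > 0 then 1 else -1)"
    have sg: "\<sigma> = 1 \<or> \<sigma> = -1" unfolding \<sigma>_def by auto
    have sga: "\<sigma> * g a > 0" using ga unfolding \<sigma>_def by auto
    have subU: "box 0 One - Gm \<subseteq> \<Union>Ms" using box_cover by blast
    have oM: "\<forall>M\<in>Ms. open M" using openM by blast
    have dM: "\<forall>M1\<in>Ms. \<forall>M2\<in>Ms. M1 \<noteq> M2 \<longrightarrow> M1 \<inter> M2 = {}" using disj by blast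
    have PQ: "P \<sigma> a \<subseteq> Q"
      using connected_in_piece[OF Pgood(2)[OF sg a(2) sga] order.trans[OF Pgood(1)[OF sg a(2) sga] subU] oM dM Q(1) Pgood(3)[OF sg a(2) sga] a(1)] .
    then have pQ: "p + (4*r*\<sigma>) *\<^sub>R n \<in> Q" using Pgood[OF sg a(2) sga] by blast
    have cb: "dist p c < r" using c by simp
    have cb1: "c \<in> ball p d1" using cb r_def r d1 by simp
    show "c \<in> closure Q"
      unfolding closure_approachable
    proof (intro allI impI)
      fix e :: real assume e: "e > 0"
      define s where "s = min (e/2) ((r - dist p c)/2)"
      have s: "s > 0" "s < e" "s < r - dist p c" using e cb unfolding s_def min_def by auto
      define y where "y = c + (s*\<sigma>) *\<^sub>R n"
      have dyc: "dist y c = s" using s nn sg unfolding y_def by (auto simp: dist_norm)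
      have "dist p y \<le> dist p c + dist c y" by (rule dist_triangle)
      then have yr: "y \<in> ball p r" using dyc s by (simp add: dist_commute)
      then have yb: "y \<in> ball p d1" using r_def r d1 by simp
      obtain z where z: "z \<in> ball p d1" "g y - g c = gr z \<bullet> (y - c)" using mvt[OF cb1 yb] by blast
      have gc: "g c = 0" using g0 c cb1 by blast
      have "\<sigma> * g y = s * (\<sigma> * \<sigma>) * (gr z \<bullet> n)" using z(2) gc unfolding y_def by (simp add: algebra_simps)
      also have "\<dots> > 0" using sg B[OF z(1)] s m by auto
      finally have sgy: "\<sigma> * g y > 0" .
      have "P \<sigma> y \<subseteq> Q"
        using connected_in_piece[OF Pgood(2)[OF sg yr sgy] order.trans[OF Pgood(1)[OF sg yr sgy] subU] oM dM Q(1) Pgood(4)[OF sg yr sgy] pQ] .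
      then have "y \<in> Q" using Pgood[OF sg yr sgy] by blast
      then show "\<exists>y\<in>Q. dist y c < e" using dyc s by auto
    qed
  qed
  show ?thesis using r main by blast
qed

lemma adjacent:
  assumes y: "y \<in> Gm" and Q: "Q \<in> Ms" "q \<in> Q" and d: "dist q y < R"
  shows "y \<in> closure Q"
proof -
  have ne: "Gm \<noteq> {}" using y by auto
  have iq: "infdist q Gm \<le> dist q y" using y by (rule infdist_le)
  then have qR: "infdist q Gm < R" using d by linarith
  define p where "p = \<xi> q"
  have p: "p \<in> Gm" "dist q p = infdist q Gm" using nearest[OF ne qR] p_def by auto
  have qp: "q \<noteq> p" using Gm_notin[OF p(1) Q(1)] Q(2) by auto
  then have dqp: "dist q p > 0" by simp
  have pQ: "p \<in> closure Q"
    unfolding closure_approachable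
  proof (intro allI impI)
    fix e :: real assume e: "e > 0"
    define s where "s = min (1/2) (e / (2 * dist q p))"
    have s: "0 < s" "s < 1" "s * dist q p \<le> e/2" using e dqp unfolding s_def min_def by (auto simp: field_simps)
    define w where "w = (1 - (1 - s)) *\<^sub>R q + (1 - s) *\<^sub>R p"
    have wseg: "w \<in> closed_segment q (\<xi> q)" unfolding w_def p_def closed_segment_def
      by (rule CollectI, rule exI[of _ "1 - s"]) (use s in simp)
    have "w - p = s *\<^sub>R (q - p)" unfolding w_def by (simp add: algebra_simps)
    then have dwp: "dist w p = s * dist q p" using s by (simp add: dist_norm)
    then have "w \<noteq> \<xi> q" using s dqp p_def by auto
    then have "w \<in> Q" using seg_to_xi[OF Q ne qR wseg] by simp
    moreover have "dist w p < e" using dwp s e by linarith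
    ultimately show "\<exists>w\<in>Q. dist w p < e" by blast
  qed
  have dpy: "dist p y < 2 * R"
  proof -
    have "dist p y \<le> dist p q + dist q y" by (rule dist_triangle)
    then show ?thesis using p(2) iq d by (simp add: dist_commute)
  qed
  have segR: "infdist ((1 - t) *\<^sub>R p + t *\<^sub>R y) Gm < R" if t: "t \<in> {0..1}" for t
  proof -
    let ?s = "(1 - t) *\<^sub>R p + t *\<^sub>R y"
    have "?s - p = t *\<^sub>R (y - p)" by (simp add: algebra_simps)
    then have d1: "dist ?s p = t * dist p y" using t by (simp add: dist_norm norm_minus_commute)
    have "?s - y = (1 - t) *\<^sub>R (p - y)" by (simp add: algebra_simps)
    then have d2: "dist ?s y = (1 - t) * dist p y" using t by (simp add: dist_norm)
    have i1: "infdist ?s Gm \<le> dist ?s p" using p(1) by (rule infdist_le)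
    have i2: "infdist ?s Gm \<le> dist ?s y" using y by (rule infdist_le)
    have "dist ?s p + dist ?s y = dist p y" using d1 d2 by (simp add: algebra_simps)
    then show ?thesis using i1 i2 dpy by linarith
  qed
  define \<gamma> where "\<gamma> = (\<lambda>t::real. \<xi> ((1 - t) *\<^sub>R p + t *\<^sub>R y))"
  have lc: "continuous_on {0..1} (\<lambda>t::real. (1 - t) *\<^sub>R p + t *\<^sub>R y)" by (intro continuous_intros)
  have lim: "(\<lambda>t::real. (1 - t) *\<^sub>R p + t *\<^sub>R y) ` {0..1} \<subseteq> {x. infdist x Gm < R}" using segR by blast
  have gc: "continuous_on {0..1} \<gamma>"
    unfolding \<gamma>_def using continuous_on_compose2[OF xi_cont[OF ne] lc lim] .
  have gG: "\<gamma> t \<in> Gm" if "t \<in> {0..1}" for t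
    unfolding \<gamma>_def using nearest(1)[OF ne segR[OF that]] .
  have g0: "\<gamma> 0 = p" unfolding \<gamma>_def using xi_Gm[OF p(1)] by simp
  have g1: "\<gamma> 1 = y" unfolding \<gamma>_def using xi_Gm[OF y] by simp
  define T where "T = {0..1} \<inter> \<gamma> -` closure Q"
  have cl: "closedin (top_of_set {0..1}) T"
    unfolding T_def by (rule continuous_closedin_preimage[OF gc closed_closure])
  have op: "openin (top_of_set {0..1}) T"
    unfolding openin_euclidean_subtopology_iff
  proof (intro conjI ballI)
    show "T \<subseteq> {0..1}" unfolding T_def by blast
    fix t assume tT: "t \<in> T"
    then have t01: "t \<in> {0..1}" and tQ: "\<gamma> t \<in> closure Q" unfolding T_def by auto
    obtain r where r: "r > 0" "\<forall>Q\<in>Ms. Q \<inter> ball (\<gamma> t) r \<noteq> {} \<longrightarrow> (\<forall>c\<in>Gm \<inter> ball (\<gamma> t) r. c \<in> closure Q)"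
      using local_sides[OF gG[OF t01]] by blast
    have QB: "Q \<inter> ball (\<gamma> t) r \<noteq> {}"
    proof -
      obtain w where "w \<in> Q" "dist w (\<gamma> t) < r" using tQ r(1) unfolding closure_approachable by blast
      then show ?thesis by (auto simp: dist_commute)
    qed
    obtain e where e: "e > 0" "\<forall>t'\<in>{0..1}. dist t' t < e \<longrightarrow> dist (\<gamma> t') (\<gamma> t) < r"
      using gc t01 r(1) unfolding continuous_on_iff by blast
    show "\<exists>e>0. \<forall>t'\<in>{0..1}. dist t' t < e \<longrightarrow> t' \<in> T"
    proof (intro exI conjI ballI impI)
      show "e > 0" using e by simp
      fix t' assume t': "t' \<in> {0..(1::real)}" "dist t' t < e"
      then have "\<gamma> t' \<in> Gm \<inter> ball (\<gamma> t) r" using e gG by (auto simp: dist_commute)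
      then have "\<gamma> t' \<in> closure Q" using r(2) Q(1) QB by blast
      then show "t' \<in> T" unfolding T_def using t' by blast
    qed
  qed
  have "T = {} \<or> T = {0..1}" using connected_clopen[THEN iffD1, OF connected_Icc] op cl by blast
  moreover have "0 \<in> T" unfolding T_def using g0 pQ by auto
  ultimately have "1 \<in> T" by auto
  then show ?thesis unfolding T_def using g1 by auto
qed

lemma upper_V:
  assumes Q: "Q \<in> Ms" "q \<in> Q" and y: "y \<in> closure Q" "y \<in> cube"
  shows "f y \<le> f q + L * norm (y - q) powr \<alpha>"
proof (cases "y \<in> Q")
  case True then show ?thesis using hold[OF Q(1) True Q(2)] by simp
next
  case False
  show ?thesis
  proof (rule ccontr)
    assume "\<not> ?thesis"
    then have lt: "f q + L * norm (y - q) powr \<alpha> < f y" by simp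
    define C where "C = f q + L * norm (y - q) powr \<alpha>"
    define C' where "C' = (C + f y) / 2"
    have CC: "C < C'" "C' < f y" using lt unfolding C_def C'_def by auto
    have "ereal (f y) \<le> Liminf (at y within (\<Union>Ms)) (\<lambda>x. ereal (f x))" using liminf[OF y(2)] by simp
    then have H: "\<forall>ya<ereal (f y). eventually (\<lambda>x. ya < ereal (f x)) (at y within (\<Union>Ms))"
      unfolding le_Liminf_iff .
    have "ereal C' < ereal (f y)" using CC(2) by simp
    then have "eventually (\<lambda>x. ereal C' < ereal (f x)) (at y within (\<Union>Ms))" using H by blast
    then have "eventually (\<lambda>x. C' < f x) (at y within (\<Union>Ms))" by simp
    then obtain d where d: "d > 0" "\<forall>x\<in>\<Union>Ms. x \<noteq> y \<and> dist x y < d \<longrightarrow> C' < f x"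
      unfolding eventually_at by blast
    have yq: "y \<noteq> q" using False Q(2) by auto
    have "((\<lambda>x. L * norm (x - q) powr \<alpha>) \<longlongrightarrow> L * norm (y - q) powr \<alpha>) (at y)"
      using yq by (intro tendsto_intros) auto
    then have "eventually (\<lambda>x. L * norm (x - q) powr \<alpha> < L * norm (y - q) powr \<alpha> + (C' - C)) (at y)"
      using CC(1) by (intro order_tendstoD(2)) auto
    then obtain d2 where d2: "d2 > 0" "\<forall>x. x \<noteq> y \<and> dist x y < d2 \<longrightarrow> L * norm (x - q) powr \<alpha> < L * norm (y - q) powr \<alpha> + (C' - C)"
      unfolding eventually_at by auto
    obtain x where x: "x \<in> Q" "dist x y < min d d2" using y(1) d d2 unfolding closure_approachable by (metis min_less_iff_conj)
    have xy: "x \<noteq> y" using x False by auto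
    have "C' < f x" using d(2) x Q(1) xy by auto
    moreover have "f x \<le> f q + L * norm (x - q) powr \<alpha>" using hold[OF Q(1) x(1) Q(2)] .
    moreover have "L * norm (x - q) powr \<alpha> < L * norm (y - q) powr \<alpha> + (C' - C)" using d2(2) xy x by auto
    ultimately show False unfolding C_def by linarith
  qed
qed

lemma approx_Q:
  assumes w: "w \<in> cube" "f w \<le> l0" and e: "e > 0"
  shows "\<exists>q\<in>\<Union>Ms. dist q w < e \<and> f q < l0 + e"
proof (rule ccontr)
  assume H: "\<not> ?thesis"
  have "\<forall>x\<in>\<Union>Ms. x \<noteq> w \<and> dist x w < e \<longrightarrow> ereal (l0 + e) \<le> ereal (f x)"
  proof (intro ballI impI)
    fix x assume x: "x \<in> \<Union>Ms" "x \<noteq> w \<and> dist x w < e"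
    have "\<not> (f x < l0 + e)"
    proof
      assume "f x < l0 + e"
      then have "\<exists>q\<in>\<Union>Ms. dist q w < e \<and> f q < l0 + e" using x by blast
      then show False using H by blast
    qed
    then show "ereal (l0 + e) \<le> ereal (f x)" by simp
  qed
  then have "eventually (\<lambda>x. ereal (l0 + e) \<le> ereal (f x)) (at w within (\<Union>Ms))"
    unfolding eventually_at using e by blast
  then have "ereal (l0 + e) \<le> Liminf (at w within (\<Union>Ms)) (\<lambda>x. ereal (f x))" by (rule Liminf_bounded)
  then have "l0 + e \<le> f w" using liminf[OF w(1)] by simp
  then show False using w e by linarith
qed

lemma thick_mem: "x \<in> thick A b \<longleftrightarrow> x \<in> cube \<and> A \<noteq> {} \<and> infdist x A \<le> b"
  unfolding thick_def sdist_def by (cases "A = {}") simp_all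

lemma cube_near_box:
  assumes "x \<in> cube" "Gm \<noteq> {}" "infdist x Gm < R"
  shows "x \<in> box 0 One"
proof (rule ccontr)
  assume "x \<notin> box 0 One"
  then have xf: "x \<in> frontier cube" using assms(1) by (simp add: frontier_cbox)
  obtain y where y: "y \<in> Gm" "dist x y < R" using infdist_lessE[OF assms(2,3)] by blast
  have "infdist y (frontier cube) \<le> dist y x" using xf by (rule infdist_le)
  then show False using bdist[OF y(1)] y(2) by (simp add: dist_commute)
qed

abbreviation "Fl \<equiv> sublevel f lam"
abbreviation "Fh \<equiv> sublevel f (lam + L * h powr \<alpha>)"
abbreviation "SS \<equiv> Sset f Ms L \<alpha> lam h"
abbreviation "SG \<equiv> segs f Ms L \<alpha> lam h"
abbreviation "KK \<equiv> Kset f Ms L \<alpha> lam h"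
abbreviation "GG \<equiv> Gset f Ms L \<alpha> lam h"
abbreviation "FF \<equiv> Fmap f Ms L \<alpha> lam h"
abbreviation "CC \<equiv> C1 f Ms L \<alpha> lam h"

lemma hpow: "h powr \<alpha> \<ge> 0" by simp

lemma Fl_Fh: "Fl \<subseteq> Fh"
proof
  fix x assume "x \<in> Fl"
  then have x: "x \<in> cube" "f x \<le> lam" unfolding sublevel_def by auto
  have "0 \<le> L * h powr \<alpha>" using L_nonneg by simp
  then show "x \<in> Fh" using x unfolding sublevel_def by simp
qed

lemma SS_mem: "z \<in> SS \<longleftrightarrow> z \<in> thick Gm h \<and> z \<notin> Fh \<and> z \<in> thick Fl h"
  unfolding Sset_def by blast

lemma SS_props:
  assumes z: "z \<in> SS"
  shows "Gm \<noteq> {}" "infdist z Gm \<le> h" "infdist z Gm < R" "z \<in> cube" "z \<notin> Fh" "Fl \<noteq> {}" "infdist z Fl \<le> h"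
    "z \<in> box 0 One"
proof -
  show g: "Gm \<noteq> {}" "infdist z Gm \<le> h" "z \<in> cube" "z \<notin> Fh" "Fl \<noteq> {}" "infdist z Fl \<le> h"
    using z unfolding SS_mem thick_mem by auto
  then show r: "infdist z Gm < R" using hR hpos by linarith
  show "z \<in> box 0 One" using cube_near_box g r by blast
qed

lemma SG_mem: "x \<in> SG \<longleftrightarrow> (\<exists>z\<in>SS. x \<in> closed_segment z (\<xi> z))"
  unfolding segs_def by blast

lemma SG_props:
  assumes x: "x \<in> SG"
  shows "Gm \<noteq> {}" "infdist x Gm \<le> h" "infdist x Gm < R" "x \<in> box 0 One" "x \<in> cube"
    "infdist x Fl \<le> 2*h" "Fl \<noteq> {}" "dist x (\<xi> x) = infdist x Gm"
proof -
  obtain z where z: "z \<in> SS" "x \<in> closed_segment z (\<xi> z)" using x SG_mem by blast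
  note zp = SS_props[OF z(1)]
  show ne: "Gm \<noteq> {}" using zp by simp
  have e: "infdist x Gm = dist x (\<xi> z)" "\<xi> x = \<xi> z" "infdist x Gm \<le> infdist z Gm" using seg_xi[OF ne zp(3) z(2)] by auto
  show "infdist x Gm \<le> h" using e zp by linarith
  then show xr: "infdist x Gm < R" using hR hpos by linarith
  have "\<xi> z \<in> box 0 One" using nearest[OF ne zp(3)] Gbox by blast
  then show xb: "x \<in> box 0 One" using box_convex_seg[OF zp(8)] z(2) by blast
  then show "x \<in> cube" using box_subset_cbox by blast
  have dzx: "dist z x \<le> h"
  proof -
    have "dist z (\<xi> z) = dist z x + dist x (\<xi> z)" using seg_dist[OF z(2)] .
    moreover have "dist z (\<xi> z) = infdist z Gm" using nearest[OF ne zp(3)] by simp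
    ultimately show ?thesis using zp(2) zero_le_dist[of x "\<xi> z"] by linarith
  qed
  have "infdist x Fl \<le> infdist z Fl + dist x z" by (rule infdist_triangle)
  then show "infdist x Fl \<le> 2*h" using zp(7) dzx by (simp add: dist_commute)
  show "Fl \<noteq> {}" using zp by simp
  show "dist x (\<xi> x) = infdist x Gm" using nearest[OF ne xr] by simp
qed

lemma SG_seg:
  assumes x: "x \<in> SG"
  obtains z where "z \<in> SS" "x \<in> closed_segment z (\<xi> z)" "\<xi> x = \<xi> z" "dist x (\<xi> x) \<le> dist z (\<xi> z)"
    "dist z (\<xi> z) \<le> h"
proof -
  obtain z where z: "z \<in> SS" "x \<in> closed_segment z (\<xi> z)" using x SG_mem by blast
  note zp = SS_props[OF z(1)]
  have e: "infdist x Gm = dist x (\<xi> z)" "\<xi> x = \<xi> z" "infdist x Gm \<le> infdist z Gm" using seg_xi[OF zp(1) zp(3) z(2)] by auto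
  have "dist z (\<xi> z) = infdist z Gm" using nearest[OF zp(1) zp(3)] by simp
  then show ?thesis using that[OF z e(2)] e zp(2) by simp
qed

lemma P1: "thick Fl h \<subseteq> KK" unfolding Kset_def by blast

lemma P2: "KK \<subseteq> thick Fl (2*h)"
proof
  fix x assume "x \<in> KK"
  then consider "x \<in> thick Fl h" | "x \<in> SG" unfolding Kset_def by blast
  then show "x \<in> thick Fl (2*h)"
  proof cases
    case 1 then show ?thesis using hpos unfolding thick_mem by auto
  next
    case 2 then show ?thesis using SG_props[OF 2] unfolding thick_mem by auto
  qed
qed

lemma C1_unique: "CC M x \<Longrightarrow> CC M' x \<Longrightarrow> M = M'"
proof -
  assume a: "CC M x" "CC M' x"
  then have b: "M \<in> Ms" "x \<in> M" "M' \<in> Ms" "x \<in> M'" unfolding C1_def by auto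
  show "M = M'"
  proof (rule ccontr)
    assume "M \<noteq> M'"
    then have "M \<inter> M' = {}" using disj b(1,3) by simp
    then show False using b(2,4) by blast
  qed
qed

lemma Fmap_C1: "CC M x \<Longrightarrow> FF (x, t) = (1 - t) *\<^sub>R x + t *\<^sub>R (\<xi> x + (pospart_term h (\<xi> x) (M \<inter> Fh) / norm (x - \<xi> x)) *\<^sub>R (x - \<xi> x))"
proof -
  assume c: "CC M x"
  have "(THE M. CC M x) = M" by (rule the_equality[where P="\<lambda>M. CC M x", OF c]) (rule C1_unique[OF _ c])
  have ex: "\<exists>M. CC M x" using c by blast
  note th = \<open>(THE M. CC M x) = M\<close>
  show ?thesis unfolding Fmap_def case_prod_conv if_P[OF ex] Let_def th by (rule refl)
qed

lemma Fmap_nC1: "\<not> (\<exists>M. CC M x) \<Longrightarrow> FF (x, t) = x"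
  unfolding Fmap_def case_prod_conv by (rule if_not_P)

definition cc :: "'a set \<Rightarrow> 'a \<Rightarrow> real" where
  "cc M x = pospart_term h (\<xi> x) (M \<inter> Fh)"

lemma C1_facts:
  assumes c: "CC M x"
  shows "M \<in> Ms" "x \<in> M" "x \<in> SG" "Gm \<noteq> {}" "infdist x Gm < R" "dist x (\<xi> x) = infdist x Gm"
    "0 < dist x (\<xi> x)" "dist x (\<xi> x) \<le> h" "0 \<le> cc M x" "cc M x \<le> dist x (\<xi> x)"
    "M \<inter> Fh \<noteq> {} \<Longrightarrow> 2*h - dist x (\<xi> x) \<le> infdist (\<xi> x) (M \<inter> Fh)"
    "M \<inter> Fh \<noteq> {} \<Longrightarrow> cc M x = max (2*h - infdist (\<xi> x) (M \<inter> Fh)) 0"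
    "M \<inter> Fh = {} \<Longrightarrow> cc M x = 0"
    "\<xi> x \<in> Gm"
proof -
  have c1: "M \<in> Ms" "x \<in> SG" "x \<in> M" "sdist (\<xi> x) (M \<inter> Fh) \<ge> ereal (2 * h - norm (x - \<xi> x))"
    using c unfolding C1_def by auto
  show "M \<in> Ms" "x \<in> M" "x \<in> SG" using c1 by auto
  note sp = SG_props[OF c1(2)]
  show ne: "Gm \<noteq> {}" "infdist x Gm < R" "dist x (\<xi> x) = infdist x Gm" using sp by auto
  show xiG: "\<xi> x \<in> Gm" using nearest[OF ne(1,2)] by simp
  have "x \<noteq> \<xi> x" using Gm_notin[OF xiG c1(1)] c1(3) by auto
  then show "0 < dist x (\<xi> x)" by simp
  show "dist x (\<xi> x) \<le> h" using sp by simp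
  show ineq: "M \<inter> Fh \<noteq> {} \<Longrightarrow> 2*h - dist x (\<xi> x) \<le> infdist (\<xi> x) (M \<inter> Fh)"
    using c1(4) by (simp add: sdist_ne dist_norm)
  show eqc: "M \<inter> Fh \<noteq> {} \<Longrightarrow> cc M x = max (2*h - infdist (\<xi> x) (M \<inter> Fh)) 0"
    unfolding cc_def pospart_term_def by simp
  show eq0: "M \<inter> Fh = {} \<Longrightarrow> cc M x = 0" unfolding cc_def pospart_term_def by simp
  show "0 \<le> cc M x" unfolding cc_def pospart_term_def by simp
  show "cc M x \<le> dist x (\<xi> x)"
  proof (cases "M \<inter> Fh = {}")
    case True then show ?thesis using eq0 by simp
  next
    case False then show ?thesis using eqc[OF False] ineq[OF False] by simp
  qed
qed

lemma Fmap_C1': "CC M x \<Longrightarrow> FF (x, t) = \<xi> x + ((1 - t) + t * (cc M x / dist x (\<xi> x))) *\<^sub>R (x - \<xi> x)"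
proof -
  assume c: "CC M x"
  have "FF (x, t) = (1 - t) *\<^sub>R x + t *\<^sub>R (\<xi> x + (cc M x / dist x (\<xi> x)) *\<^sub>R (x - \<xi> x))"
    using Fmap_C1[OF c, of t] unfolding cc_def by (simp add: dist_norm)
  also have "\<dots> = \<xi> x + ((1 - t) + t * (cc M x / dist x (\<xi> x))) *\<^sub>R (x - \<xi> x)"
    by (simp add: algebra_simps)
  finally show ?thesis .
qed

lemma F0: "FF (x, 0) = x"
proof (cases "\<exists>M. CC M x")
  case True then obtain M where "CC M x" by blast
  then show ?thesis using Fmap_C1'[of M x 0] by simp
next
  case False then show ?thesis using Fmap_nC1 by simp
qed

lemma F_seg:
  assumes c: "CC M x" and t: "0 \<le> t" "t \<le> 1"
  shows "FF (x, t) \<in> closed_segment (\<xi> x) x"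
proof -
  note cf = C1_facts[OF c]
  define qv where "qv = cc M x / dist x (\<xi> x)"
  define u where "u = (1 - t) + t * qv"
  have q: "0 \<le> qv" "qv \<le> 1" using cf unfolding qv_def by (auto simp: divide_le_eq_1)
  have "t * qv \<le> t" by (rule mult_left_le[OF q(2) t(1)])
  moreover have "0 \<le> t * qv" using q t by simp
  ultimately have u: "0 \<le> u" "u \<le> 1" unfolding u_def using t by auto
  have "FF (x, t) = (1 - u) *\<^sub>R \<xi> x + u *\<^sub>R x" using Fmap_C1'[OF c, of t] unfolding qv_def[symmetric] u_def[symmetric]
    by (simp add: algebra_simps)
  then show ?thesis unfolding closed_segment_def using u by blast
qed

lemma F_in_K:
  assumes x: "x \<in> KK" and t: "0 \<le> t" "t \<le> 1"
  shows "FF (x, t) \<in> KK"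
proof (cases "\<exists>M. CC M x")
  case False then show ?thesis using Fmap_nC1 x by simp
next
  case True
  then obtain M where c: "CC M x" by blast
  note cf = C1_facts[OF c]
  obtain z where z: "z \<in> SS" "x \<in> closed_segment z (\<xi> z)" "\<xi> x = \<xi> z" using SG_seg[OF cf(3)] by metis
  have "closed_segment (\<xi> x) x \<subseteq> closed_segment z (\<xi> z)" using z by (simp add: subset_closed_segment)
  then have "FF (x, t) \<in> closed_segment z (\<xi> z)" using F_seg[OF c t] by blast
  then have "FF (x, t) \<in> SG" using z(1) SG_mem by blast
  then show ?thesis unfolding Kset_def by blast
qed

lemma P3: "Fl \<subseteq> GG"
proof
  fix x assume xF: "x \<in> Fl"
  have xc: "x \<in> cube" using xF unfolding sublevel_def by auto
  have "x \<in> thick Fl h" unfolding thick_mem using xF xc hpos by auto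
  then have xK: "x \<in> KK" unfolding Kset_def by blast
  have "\<not> (\<exists>M. CC M x)"
  proof
    assume "\<exists>M. CC M x"
    then obtain M where c: "CC M x" by blast
    note cf = C1_facts[OF c]
    have xA: "x \<in> M \<inter> Fh" using cf(2) xF Fl_Fh by blast
    then have ne: "M \<inter> Fh \<noteq> {}" by blast
    have "infdist (\<xi> x) (M \<inter> Fh) \<le> dist (\<xi> x) x" using xA by (rule infdist_le)
    then have Dh: "h \<le> dist x (\<xi> x)" using cf(11)[OF ne] by (simp add: dist_commute)
    obtain z where z: "z \<in> SS" "x \<in> closed_segment z (\<xi> z)" "\<xi> x = \<xi> z" "dist x (\<xi> x) \<le> dist z (\<xi> z)"
      "dist z (\<xi> z) \<le> h" using SG_seg[OF cf(3)] by metis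
    have sd: "dist z (\<xi> z) = dist z x + dist x (\<xi> z)" using seg_dist[OF z(2)] .
    have Dh': "h \<le> dist x (\<xi> z)" using Dh z(3) by simp
    have "dist z x = 0" using sd Dh' z(5) zero_le_dist[of z x] by linarith
    then have "x = z" by simp
    then show False using z(1) xA unfolding SS_mem by blast
  qed
  then have "FF (x, 1) = x" using Fmap_nC1 by simp
  then show "x \<in> GG" unfolding Gset_def using xK by force
qed

lemma idem:
  assumes a: "a \<in> GG"
  shows "FF (a, 1) = a"
proof -
  obtain x where x: "x \<in> KK" "a = FF (x, 1)" using a unfolding Gset_def by blast
  show ?thesis
  proof (cases "\<exists>M. CC M x")
    case False then show ?thesis using Fmap_nC1 x by simp
  next
    case True
    then obtain M where c: "CC M x" by blast
    note cf = C1_facts[OF c]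
    define D where "D = dist x (\<xi> x)"
    have ae: "a = \<xi> x + (cc M x / D) *\<^sub>R (x - \<xi> x)" using Fmap_C1'[OF c, of 1] x(2) D_def by simp
    show ?thesis
    proof (cases "cc M x = 0")
      case True
      then have "a = \<xi> x" using ae by simp
      then have "a \<in> Gm" using cf by simp
      then have "\<not> (\<exists>M. CC M a)" using Gm_notin unfolding C1_def by blast
      then show ?thesis using Fmap_nC1 by simp
    next
      case False
      then have cpos: "cc M x > 0" using cf by simp
      have ne: "M \<inter> Fh \<noteq> {}" using cf(13) False by blast
      have ceq: "cc M x = 2*h - infdist (\<xi> x) (M \<inter> Fh)" using cf(12)[OF ne] cpos by simp
      have aseg: "a \<in> closed_segment x (\<xi> x)"
        using F_seg[OF c, of 1] x(2) by (simp add: closed_segment_commute)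
      have "a - \<xi> x = (cc M x / D) *\<^sub>R (x - \<xi> x)" using ae by simp
      then have da: "dist a (\<xi> x) = cc M x" using cf D_def by (simp add: dist_norm)
      then have anx: "a \<noteq> \<xi> x" using cpos by auto
      have aM: "a \<in> M" using seg_to_xi[OF cf(1,2,4,5) aseg anx] .
      obtain z where z: "z \<in> SS" "x \<in> closed_segment z (\<xi> z)" "\<xi> x = \<xi> z" using SG_seg[OF cf(3)] by metis
      have "closed_segment (\<xi> x) x \<subseteq> closed_segment z (\<xi> z)" using z by (simp add: subset_closed_segment)
      then have az: "a \<in> closed_segment z (\<xi> z)" using aseg by (auto simp: closed_segment_commute)
      then have aSG: "a \<in> SG" using z(1) SG_mem by blast
      have xia: "\<xi> a = \<xi> x" using seg_xi(2)[OF cf(4) SS_props(3)[OF z(1)] az] z(3) by simp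
      have "CC M a" unfolding C1_def
        using cf(1) aM aSG ne ceq da xia by (simp add: sdist_ne dist_norm)
      then have "FF (a, 1) = \<xi> a + (cc M a / dist a (\<xi> a)) *\<^sub>R (a - \<xi> a)" using Fmap_C1'[of M a 1] by simp
      also have "cc M a = cc M x" unfolding cc_def using xia by simp
      also have "\<xi> a + (cc M x / dist a (\<xi> a)) *\<^sub>R (a - \<xi> a) = a" using xia da cpos by simp
      finally show ?thesis .
    qed
  qed
qed

lemma Bform: "lam + L * (1 + 3 powr \<alpha>) * h powr \<alpha> = lam + L * h powr \<alpha> + L * (3*h) powr \<alpha>"
  using hpos by (simp add: powr_mult algebra_simps)

lemma Lpow_mono: "0 \<le> a \<Longrightarrow> a \<le> b \<Longrightarrow> L * a powr \<alpha> \<le> L * b powr \<alpha>"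
  using L_nonneg alpha by (intro mult_left_mono powr_mono2) auto

lemma lim_eps:
  assumes e0: "e0 > 0" and k: "k > 0"
    and H: "\<And>e. 0 < e \<Longrightarrow> e < e0 \<Longrightarrow> a \<le> b + e + L * (k + m*e) powr \<alpha>"
  shows "a \<le> b + L * k powr \<alpha>"
proof -
  have lim: "((\<lambda>e. b + e + L * (k + m*e) powr \<alpha>) \<longlongrightarrow> b + 0 + L * (k + m*0) powr \<alpha>) (at_right 0)"
    using k by (intro tendsto_intros) auto
  have ev: "eventually (\<lambda>e. a \<le> b + e + L * (k + m*e) powr \<alpha>) (at_right (0::real))"
    unfolding eventually_at_right[OF e0] by (intro exI[of _ e0]) (use e0 H in auto)
  have "a \<le> b + 0 + L * (k + m*0) powr \<alpha>"
    by (rule tendsto_le[OF trivial_limit_at_right_real lim tendsto_const ev])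
  then show ?thesis by simp
qed

lemma seg_closure:
  assumes Q: "Q \<in> Ms" "q \<in> Q" and y: "y \<in> cube"
    and avoid: "\<And>s. s \<in> closed_segment q y \<Longrightarrow> s \<noteq> y \<Longrightarrow> s \<notin> Gm"
  shows "y \<in> closure Q"
proof -
  have qb: "q \<in> box 0 One" using Mbox Q by blast
  have inQ: "s \<in> Q" if s: "s \<in> closed_segment q y" "s \<noteq> y" for s
  proof -
    have sub: "closed_segment q s \<subseteq> closed_segment q y" using s(1) by (simp add: subset_closed_segment)
    have "closed_segment q s \<subseteq> box 0 One - Gm"
    proof
      fix w assume w: "w \<in> closed_segment q s"
      have wy: "w \<noteq> y"
      proof
        assume "w = y"
        then have "dist q s = dist q y + dist y s" using seg_dist w by metis
        moreover have "dist q y = dist q s + dist s y" using seg_dist s(1) by metis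
        ultimately have "dist s y = 0" by (simp add: dist_commute)
        then show False using s(2) by simp
      qed
      have wseg: "w \<in> closed_segment q y" using w sub by blast
      have "w \<in> box 0 One"
      proof (cases "w = q")
        case True then show ?thesis using qb by simp
      next
        case False
        then have "w \<in> open_segment q y" using wseg wy by (simp add: open_segment_def)
        moreover have "open_segment q y \<subseteq> interior cube"
          using in_interior_closure_convex_segment[of cube q y] qb y by (simp add: convex_box)
        then have "open_segment q y \<subseteq> box 0 One" by (simp add: interior_cbox)
        ultimately show ?thesis by blast
      qed
      then show "w \<in> box 0 One - Gm" using avoid[OF wseg wy] by blast
    qed
    then show ?thesis using seg_piece[OF Q] s by blast
  qed
  show ?thesis
    unfolding closure_approachable
  proof (intro allI impI)
    fix e :: real assume e: "e > 0"
    show "\<exists>s\<in>Q. dist s y < e"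
    proof (cases "q = y")
      case True then have "y \<in> Q" "dist y y < e" using Q e by auto
      then show ?thesis by blast
    next
      case False
      then have dq: "dist q y > 0" by simp
      define t where "t = min (1/2) (e / (2 * dist q y))"
      have t: "0 < t" "t < 1" "t * dist q y \<le> e/2" using e dq unfolding t_def min_def by (auto simp: field_simps)
      define s where "s = (1 - (1 - t)) *\<^sub>R q + (1 - t) *\<^sub>R y"
      have sseg: "s \<in> closed_segment q y" unfolding s_def closed_segment_def
        by (rule CollectI, rule exI[of _ "1 - t"]) (use t in simp)
      have "s - y = t *\<^sub>R (q - y)" unfolding s_def by (simp add: algebra_simps)
      then have dsy: "dist s y = t * dist q y" using t by (simp add: dist_norm)
      then have "s \<noteq> y" using t dq by auto
      then have "s \<in> Q" using inQ sseg by blast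
      moreover have "dist s y < e" using dsy t e by linarith
      ultimately show ?thesis by blast
    qed
  qed
qed

lemma KK_cube: "y \<in> KK \<Longrightarrow> y \<in> cube"
proof -
  assume "y \<in> KK"
  then have "y \<in> thick Fl (2*h)" using P2 by blast
  then show ?thesis unfolding thick_mem by blast
qed

lemma bound_Gm:
  assumes y: "y \<in> KK" "y \<in> Gm"
  shows "f y \<le> lam + L * (2*h) powr \<alpha>"
proof -
  have "y \<in> thick Fl (2*h)" using P2 y(1) by blast
  then have yt: "y \<in> cube" "Fl \<noteq> {}" "infdist y Fl \<le> 2*h" unfolding thick_mem by auto
  define e0 where "e0 = (R - 2*h)/2"
  have e0: "e0 > 0" using hR unfolding e0_def by simp
  show ?thesis
  proof (rule lim_eps[OF e0, of "2*h" _ _ 2])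
    show "0 < 2*h" using hpos by simp
    fix e :: real assume e: "0 < e" "e < e0"
    have "infdist y Fl < 2*h + e" using yt e by linarith
    then obtain w where w: "w \<in> Fl" "dist y w < 2*h + e" using infdist_lessE[OF yt(2)] by blast
    have wc: "w \<in> cube" "f w \<le> lam" using w(1) unfolding sublevel_def by auto
    obtain q where q: "q \<in> \<Union>Ms" "dist q w < e" "f q < lam + e" using approx_Q[OF wc e(1)] by blast
    then obtain Q where Q: "Q \<in> Ms" "q \<in> Q" by blast
    have "dist q y \<le> dist q w + dist w y" by (rule dist_triangle)
    then have dqy: "dist q y < 2*h + 2*e" using q w by (simp add: dist_commute)
    moreover have "2*h + 2*e < R" using e unfolding e0_def by (simp add: field_simps)
    ultimately have "dist q y < R" by linarith
    then have "y \<in> closure Q" using adjacent[OF y(2) Q] by simp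
    then have "f y \<le> f q + L * norm (y - q) powr \<alpha>" using upper_V[OF Q _ yt(1)] by simp
    also have "L * norm (y - q) powr \<alpha> \<le> L * (2*h + 2*e) powr \<alpha>"
      using dqy by (intro Lpow_mono) (auto simp: dist_norm norm_minus_commute)
    finally show "f y \<le> lam + e + L * (2*h + 2*e) powr \<alpha>" using q by linarith
  qed
qed

lemma bound_box_free:
  assumes y: "y \<in> KK" "y \<notin> box 0 One"
  shows "f y \<le> lam + L * h powr \<alpha>"
proof -
  have yc: "y \<in> cube" using KK_cube y(1) by blast
  have yf: "y \<in> frontier cube" using yc y(2) by (simp add: frontier_cbox)
  have "y \<notin> SG" using SG_props(4) y(2) by blast
  then have "y \<in> thick Fl h" using y(1) unfolding Kset_def by blast
  then have yt: "Fl \<noteq> {}" "infdist y Fl \<le> h" unfolding thick_mem by auto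
  define e0 where "e0 = (R - h)/2"
  have e0: "e0 > 0" using hR hpos unfolding e0_def by simp
  show ?thesis
  proof (rule lim_eps[OF e0 hpos, of _ _ 2])
    fix e :: real assume e: "0 < e" "e < e0"
    have "infdist y Fl < h + e" using yt e by linarith
    then obtain w where w: "w \<in> Fl" "dist y w < h + e" using infdist_lessE[OF yt(1)] by blast
    have wc: "w \<in> cube" "f w \<le> lam" using w(1) unfolding sublevel_def by auto
    obtain q where q: "q \<in> \<Union>Ms" "dist q w < e" "f q < lam + e" using approx_Q[OF wc e(1)] by blast
    then obtain Q where Q: "Q \<in> Ms" "q \<in> Q" by blast
    have "dist q y \<le> dist q w + dist w y" by (rule dist_triangle)
    then have dqy: "dist q y < h + 2*e" using q w by (simp add: dist_commute)
    have "y \<in> closure Q"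
    proof (rule seg_closure[OF Q yc])
      fix s assume s: "s \<in> closed_segment q y" "s \<noteq> y"
      show "s \<notin> Gm"
      proof
        assume sG: "s \<in> Gm"
        have "dist s y \<le> dist q y" using dist_in_closed_segment[OF s(1)] by (simp add: dist_commute)
        moreover have "infdist s (frontier cube) \<le> dist s y" using yf by (rule infdist_le)
        moreover have "h + 2*e < R" using e unfolding e0_def by (simp add: field_simps)
        ultimately show False using bdist[OF sG] dqy by linarith
      qed
    qed
    then have "f y \<le> f q + L * norm (y - q) powr \<alpha>" using upper_V[OF Q _ yc] by simp
    also have "L * norm (y - q) powr \<alpha> \<le> L * (h + 2*e) powr \<alpha>"
      using dqy by (intro Lpow_mono) (auto simp: dist_norm norm_minus_commute)
    finally show "f y \<le> lam + e + L * (h + 2*e) powr \<alpha>" using q by linarith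
  qed
qed

lemma bound_M_far:
  assumes M: "M \<in> Ms" "y \<in> M" and yt: "y \<in> thick Fl h" and far: "Gm = {} \<or> infdist y Gm > h"
  shows "f y \<le> lam + L * h powr \<alpha>"
proof -
  have yt': "Fl \<noteq> {}" "infdist y Fl \<le> h" using yt unfolding thick_mem by auto
  define e0 where "e0 = (if Gm = {} then 1 else (infdist y Gm - h)/2)"
  have e0: "e0 > 0" using far unfolding e0_def by auto
  have yb: "y \<in> box 0 One" using Mbox M by blast
  show ?thesis
  proof (rule lim_eps[OF e0 hpos, of _ _ 2])
    fix e :: real assume e: "0 < e" "e < e0"
    have "infdist y Fl < h + e" using yt' e by linarith
    then obtain w where w: "w \<in> Fl" "dist y w < h + e" using infdist_lessE[OF yt'(1)] by blast
    have wc: "w \<in> cube" "f w \<le> lam" using w(1) unfolding sublevel_def by auto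
    obtain q where q: "q \<in> \<Union>Ms" "dist q w < e" "f q < lam + e" using approx_Q[OF wc e(1)] by blast
    then obtain Q where Q: "Q \<in> Ms" "q \<in> Q" by blast
    have qb: "q \<in> box 0 One" using Mbox Q by blast
    have "dist q y \<le> dist q w + dist w y" by (rule dist_triangle)
    then have dqy: "dist y q < h + 2*e" using q w by (simp add: dist_commute)
    have "closed_segment y q \<subseteq> box 0 One - Gm"
    proof
      fix s assume s: "s \<in> closed_segment y q"
      have "s \<in> box 0 One" using box_convex_seg[OF yb qb] s by blast
      moreover have "s \<notin> Gm"
      proof
        assume sG: "s \<in> Gm"
        then have ne: "Gm \<noteq> {}" by auto
        have "dist y s \<le> dist y q" using dist_in_closed_segment[OF s] by (simp add: dist_commute)
        moreover have "infdist y Gm \<le> dist y s" using sG by (rule infdist_le)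
        ultimately show False using dqy e e0_def ne by (simp split: if_splits)
      qed
      ultimately show "s \<in> box 0 One - Gm" by blast
    qed
    then have "q \<in> M" using seg_piece[OF M] by blast
    then have "f y \<le> f q + L * norm (y - q) powr \<alpha>" using hold[OF M(1) M(2)] by blast
    also have "L * norm (y - q) powr \<alpha> \<le> L * (h + 2*e) powr \<alpha>"
      using dqy by (intro Lpow_mono) (auto simp: dist_norm)
    finally show "f y \<le> lam + e + L * (h + 2*e) powr \<alpha>" using q by linarith
  qed
qed

lemma Bge1: "lam + L * h powr \<alpha> \<le> lam + L * (1 + 3 powr \<alpha>) * h powr \<alpha>"
proof -
  have "0 \<le> L * (3*h) powr \<alpha>" using L_nonneg by simp
  then show ?thesis unfolding Bform by linarith
qed

lemma Bge2: "lam + L * h powr \<alpha> + L * (2*h) powr \<alpha> \<le> lam + L * (1 + 3 powr \<alpha>) * h powr \<alpha>"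
proof -
  have "L * (2*h) powr \<alpha> \<le> L * (3*h) powr \<alpha>" using hpos by (intro Lpow_mono) auto
  then show ?thesis unfolding Bform by linarith
qed

lemma bound_nC1:
  assumes y: "y \<in> KK" and nc: "\<not> (\<exists>M. CC M y)"
  shows "f y \<le> lam + L * (1 + 3 powr \<alpha>) * h powr \<alpha>"
proof -
  have h0: "0 \<le> L * h powr \<alpha>" using L_nonneg by simp
  have yc: "y \<in> cube" using KK_cube y by blast
  show ?thesis
  proof (cases "y \<in> Gm")
    case True
    then have "f y \<le> lam + L * (2*h) powr \<alpha>" using bound_Gm y by blast
    then show ?thesis using Bge2 h0 by linarith
  next
    case yG: False
    show ?thesis
    proof (cases "y \<in> box 0 One")
      case False
      then show ?thesis using bound_box_free[OF y False] Bge1 by linarith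
    next
      case True
      then obtain M where M: "M \<in> Ms" "y \<in> M" using box_cover yG by blast
      show ?thesis
      proof (cases "y \<in> SG")
        case ySG: True
        note sp = SG_props[OF ySG]
        have "\<not> (sdist (\<xi> y) (M \<inter> Fh) \<ge> ereal (2 * h - norm (y - \<xi> y)))"
          using nc M ySG unfolding C1_def by blast
        then have lt: "sdist (\<xi> y) (M \<inter> Fh) < ereal (2 * h - norm (y - \<xi> y))" by simp
        then have ne: "M \<inter> Fh \<noteq> {}" unfolding sdist_def by auto
        then have "infdist (\<xi> y) (M \<inter> Fh) < 2 * h - norm (y - \<xi> y)" using lt by (simp add: sdist_ne)
        then obtain a where a: "a \<in> M \<inter> Fh" "dist (\<xi> y) a < 2 * h - norm (y - \<xi> y)"
          using infdist_lessE[OF ne] by blast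
        have "dist y a \<le> dist y (\<xi> y) + dist (\<xi> y) a" by (rule dist_triangle)
        then have dya: "dist y a < 2*h" using a(2) by (simp add: dist_norm)
        have fa: "f a \<le> lam + L * h powr \<alpha>" using a(1) unfolding sublevel_def by auto
        have f1: "f y \<le> f a + L * norm (y - a) powr \<alpha>" using hold[OF M(1) M(2)] a(1) by blast
        have f2: "L * norm (y - a) powr \<alpha> \<le> L * (2*h) powr \<alpha>"
          using dya by (intro Lpow_mono) (auto simp: dist_norm)
        show ?thesis using f1 f2 fa Bge2 by linarith
      next
        case ySG: False
        then have yt: "y \<in> thick Fl h" using y unfolding Kset_def by blast
        show ?thesis
        proof (cases "y \<in> Fh")
          case True
          then have "f y \<le> lam + L * h powr \<alpha>" unfolding sublevel_def by auto
          then show ?thesis using Bge1 by linarith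
        next
          case yF: False
          have far: "Gm = {} \<or> infdist y Gm > h"
          proof (rule ccontr)
            assume "\<not> (Gm = {} \<or> infdist y Gm > h)"
            then have "Gm \<noteq> {}" "infdist y Gm \<le> h" by auto
            then have "y \<in> thick Gm h" using yc unfolding thick_mem by auto
            then have ySS: "y \<in> SS" using yF yt unfolding SS_mem by blast
            have "y \<in> closed_segment y (\<xi> y)" by simp
            then have "y \<in> SG" using ySS SG_mem by blast
            then show False using ySG by blast
          qed
          then show ?thesis using bound_M_far[OF M yt] Bge1 by linarith
        qed
      qed
    qed
  qed
qed

lemma bound_C1pos:
  assumes c: "CC M x" and cpos: "cc M x > 0"
  shows "f (FF (x, 1)) \<le> lam + L * (1 + 3 powr \<alpha>) * h powr \<alpha>"
proof -
  note cf = C1_facts[OF c]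
  define a where "a = FF (x, 1)"
  define D where "D = dist x (\<xi> x)"
  have ae: "a = \<xi> x + (cc M x / D) *\<^sub>R (x - \<xi> x)" using Fmap_C1'[OF c, of 1] a_def D_def by simp
  have ne: "M \<inter> Fh \<noteq> {}" using cf(13) cpos by auto
  have ceq: "cc M x = 2*h - infdist (\<xi> x) (M \<inter> Fh)" using cf(12)[OF ne] cpos by simp
  have aseg: "a \<in> closed_segment x (\<xi> x)"
    using F_seg[OF c, of 1] a_def by (simp add: closed_segment_commute)
  have "a - \<xi> x = (cc M x / D) *\<^sub>R (x - \<xi> x)" using ae by simp
  then have da: "dist a (\<xi> x) = cc M x" using cf D_def by (simp add: dist_norm)
  then have anx: "a \<noteq> \<xi> x" using cpos by auto
  have aM: "a \<in> M" using seg_to_xi[OF cf(1,2,4,5) aseg anx] .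
  have "infdist (\<xi> x) (M \<inter> Fh) < 2*h - cc M x + h" using ceq hpos by linarith
  then obtain b where b: "b \<in> M \<inter> Fh" "dist (\<xi> x) b < 3*h - cc M x" using infdist_lessE[OF ne] by force
  have "dist a b \<le> dist a (\<xi> x) + dist (\<xi> x) b" by (rule dist_triangle)
  then have dab: "dist a b < 3*h" using da b(2) by linarith
  have fb: "f b \<le> lam + L * h powr \<alpha>" using b(1) unfolding sublevel_def by auto
  have f1: "f a \<le> f b + L * norm (a - b) powr \<alpha>" using hold[OF cf(1) aM] b(1) by blast
  have f2: "L * norm (a - b) powr \<alpha> \<le> L * (3*h) powr \<alpha>"
    using dab by (intro Lpow_mono) (auto simp: dist_norm)
  have "f a \<le> lam + L * (1 + 3 powr \<alpha>) * h powr \<alpha>" using f1 f2 fb Bform by linarith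
  then show ?thesis using a_def by simp
qed

lemma P4: "GG \<subseteq> sublevel f (lam + L * (1 + 3 powr \<alpha>) * h powr \<alpha>)"
proof
  fix y assume yG: "y \<in> GG"
  then obtain x where x: "x \<in> KK" "y = FF (x, 1)" unfolding Gset_def by blast
  have yK: "y \<in> KK" using F_in_K[OF x(1), of 1] x(2) by simp
  have yc: "y \<in> cube" using KK_cube yK by blast
  have "f y \<le> lam + L * (1 + 3 powr \<alpha>) * h powr \<alpha>"
  proof (cases "\<exists>M. CC M x")
    case False
    then have "y = x" using Fmap_nC1 x(2) by simp
    then show ?thesis using bound_nC1 x(1) False by blast
  next
    case True
    then obtain M where c: "CC M x" by blast
    note cf = C1_facts[OF c]
    show ?thesis
    proof (cases "cc M x > 0")
      case True then show ?thesis using bound_C1pos[OF c] x(2) by simp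
    next
      case False
      then have "cc M x = 0" using cf(9) by simp
      then have "y = \<xi> x" using Fmap_C1'[OF c, of 1] x(2) by simp
      then have "y \<in> Gm" using cf(14) by simp
      then have "\<not> (\<exists>M. CC M y)" using Gm_notin unfolding C1_def by blast
      then show ?thesis using bound_nC1 yK by blast
    qed
  qed
  then show "y \<in> sublevel f (lam + L * (1 + 3 powr \<alpha>) * h powr \<alpha>)" using yc unfolding sublevel_def by simp
qed

definition psi :: "'a set \<Rightarrow> 'a \<Rightarrow> 'a" where
  "psi M y = \<xi> y + (cc M y / dist y (\<xi> y)) *\<^sub>R (y - \<xi> y)"

lemma Phi_C1: "CC M y \<Longrightarrow> FF (y, 1) = psi M y"
  using Fmap_C1'[of M y 1] unfolding psi_def by simp

lemma aux_lin: "(b::'a) + a *\<^sub>R (y - b) - y = (a - 1) *\<^sub>R (y - b)"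
  by (simp add: algebra_simps)

lemma Phi_dist: "CC M y \<Longrightarrow> dist (FF (y, 1)) y = dist y (\<xi> y) - cc M y"
proof -
  assume c: "CC M y"
  note cf = C1_facts[OF c]
  define D where "D = dist y (\<xi> y)"
  define a where "a = cc M y / D"
  have D: "D > 0" using cf D_def by simp
  have "FF (y, 1) = \<xi> y + a *\<^sub>R (y - \<xi> y)" using Phi_C1[OF c] unfolding psi_def a_def D_def .
  then have "FF (y, 1) - y = (a - 1) *\<^sub>R (y - \<xi> y)" using aux_lin by metis
  then have d1: "dist (FF (y, 1)) y = \<bar>a - 1\<bar> * D" unfolding dist_norm D_def by simp
  have q: "a \<le> 1" using cf(10) D unfolding a_def D_def by (simp add: divide_le_eq_1)
  have a1: "\<bar>a - 1\<bar> = 1 - a" using q by (simp add: abs_of_nonpos)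
  have a2: "(1 - a) * D = D - cc M y" using D unfolding a_def by (simp add: left_diff_distrib)
  show ?thesis using d1 a1 a2 unfolding D_def by simp
qed

lemma psi_cont:
  assumes M: "M \<in> Ms" and ne: "Gm \<noteq> {}"
  shows "continuous_on ({y. infdist y Gm < R} \<inter> M) (psi M)"
proof -
  let ?W = "{y. infdist y Gm < R} \<inter> M"
  have xc: "continuous_on ?W \<xi>" by (rule continuous_on_subset[OF xi_cont[OF ne]]) blast
  have ccc: "continuous_on ?W (cc M)"
  proof (cases "M \<inter> Fh = {}")
    case True
    have "cc M = (\<lambda>y. 0)" by (rule ext) (simp add: cc_def pospart_term_def True)
    then show ?thesis by simp
  next
    case False
    have "cc M = (\<lambda>y. max (2 * h - infdist (\<xi> y) (M \<inter> Fh)) 0)" by (rule ext) (simp add: cc_def pospart_term_def False)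
    moreover have "continuous_on ?W (\<lambda>y. max (2 * h - infdist (\<xi> y) (M \<inter> Fh)) 0)"
      by (rule continuous_on_max[OF continuous_on_diff[OF continuous_on_const continuous_on_infdist[OF xc]] continuous_on_const])
    ultimately show ?thesis by simp
  qed
  have nz: "\<forall>y\<in>?W. dist y (\<xi> y) \<noteq> 0"
  proof
    fix y assume y: "y \<in> ?W"
    have yR: "infdist y Gm < R" using y by simp
    have "\<xi> y \<in> Gm" using nearest(1)[OF ne yR] .
    moreover have "y \<in> M" using y by simp
    ultimately have "\<xi> y \<noteq> y" using Gm_notin[OF _ M] by metis
    then show "dist y (\<xi> y) \<noteq> 0" by simp
  qed
  have dc: "continuous_on ?W (\<lambda>y. dist y (\<xi> y))" by (rule continuous_on_dist[OF continuous_on_id xc])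
  have c1: "continuous_on ?W (\<lambda>y. y - \<xi> y)" by (rule continuous_on_diff[OF continuous_on_id xc])
  have c2: "continuous_on ?W (\<lambda>y. cc M y / dist y (\<xi> y))" by (rule continuous_on_divide[OF ccc dc nz])
  have c3: "continuous_on ?W (\<lambda>y. (cc M y / dist y (\<xi> y)) *\<^sub>R (y - \<xi> y))" by (rule continuous_on_scaleR[OF c2 c1])
  show ?thesis unfolding psi_def by (rule continuous_on_add[OF xc c3])
qed

lemma KM_Fh:
  assumes y: "y \<in> KK" "M \<in> Ms" "y \<in> M" "y \<notin> SG"
  shows "y \<in> Fh"
proof (rule ccontr)
  assume yF: "y \<notin> Fh"
  have yc: "y \<in> cube" using KK_cube y by blast
  have yt: "y \<in> thick Fl h" using y unfolding Kset_def by blast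
  show False
  proof (cases "Gm \<noteq> {} \<and> infdist y Gm \<le> h")
    case True
    then have "y \<in> thick Gm h" using yc unfolding thick_mem by auto
    then have ySS: "y \<in> SS" using yF yt unfolding SS_mem by blast
    have "y \<in> closed_segment y (\<xi> y)" by simp
    then have "y \<in> SG" using ySS SG_mem by blast
    then show False using y by blast
  next
    case False
    then have "Gm = {} \<or> infdist y Gm > h" by auto
    then have "f y \<le> lam + L * h powr \<alpha>" using bound_M_far[OF y(2,3) yt] by blast
    then show False using yF yc unfolding sublevel_def by auto
  qed
qed

lemma C1_in: "CC M' y \<Longrightarrow> M \<in> Ms \<Longrightarrow> y \<in> M \<Longrightarrow> CC M y"
proof -
  assume c: "CC M' y" and M: "M \<in> Ms" "y \<in> M"
  have "M' \<in> Ms" "y \<in> M'" using C1_facts[OF c] by auto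
  then have "M' = M" using disj M by blast
  then show ?thesis using c by simp
qed

lemma C1_iff:
  assumes M: "M \<in> Ms" "y \<in> M" "y \<in> SG"
  shows "CC M y \<longleftrightarrow> (M \<inter> Fh = {} \<or> infdist (\<xi> y) (M \<inter> Fh) + dist y (\<xi> y) \<ge> 2*h)"
proof (cases "M \<inter> Fh = {}")
  case True
  have "sdist (\<xi> y) (M \<inter> Fh) = \<infinity>" using True by (simp add: sdist_def)
  then have "CC M y" unfolding C1_def using M by simp
  then show ?thesis using True by simp
next
  case False
  have "CC M y \<longleftrightarrow> ereal (2*h - norm (y - \<xi> y)) \<le> sdist (\<xi> y) (M \<inter> Fh)" unfolding C1_def using M by simp
  also have "\<dots> \<longleftrightarrow> 2*h - norm (y - \<xi> y) \<le> infdist (\<xi> y) (M \<inter> Fh)" using sdist_ne[OF False] by simp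
  also have "\<dots> \<longleftrightarrow> infdist (\<xi> y) (M \<inter> Fh) + dist y (\<xi> y) \<ge> 2*h" unfolding dist_norm by linarith
  finally show ?thesis using False by simp
qed

lemma psi_fix: "CC M x \<Longrightarrow> cc M x = dist x (\<xi> x) \<Longrightarrow> psi M x = x"
proof -
  assume c: "CC M x" and e: "cc M x = dist x (\<xi> x)"
  have "dist x (\<xi> x) > 0" using C1_facts[OF c] by simp
  then show ?thesis unfolding psi_def e by simp
qed

lemma cont_Gm:
  assumes x: "x \<in> Gm" and y: "y \<in> KK"
  shows "dist (FF (y, 1)) x \<le> 2 * dist y x"
proof (cases "\<exists>M. CC M y")
  case True
  then obtain M where c: "CC M y" by blast
  note cf = C1_facts[OF c]
  have "dist (FF (y, 1)) y \<le> dist y (\<xi> y)" using Phi_dist[OF c] cf(9) by linarith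
  also have "\<dots> = infdist y Gm" using cf by simp
  also have "\<dots> \<le> dist y x" using x by (rule infdist_le)
  finally have "dist (FF (y, 1)) y \<le> dist y x" .
  moreover have "dist (FF (y, 1)) x \<le> dist (FF (y, 1)) y + dist y x" by (rule dist_triangle)
  ultimately show ?thesis by linarith
next
  case False then show ?thesis using Fmap_nC1 by simp
qed

lemma cont_nbox:
  assumes x: "x \<in> cube" "x \<notin> box 0 One" and d: "dist y x < R - h"
  shows "\<not> (\<exists>M. CC M y)"
proof
  assume "\<exists>M. CC M y"
  then obtain M where c: "CC M y" by blast
  note sp = SG_props[OF C1_facts(3)[OF c]]
  have xf: "x \<in> frontier cube" using x by (simp add: frontier_cbox)
  have "infdist x Gm \<le> infdist y Gm + dist x y" by (rule infdist_triangle)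
  then have "infdist x Gm < R" using sp(2) d by (simp add: dist_commute)
  then obtain g where g: "g \<in> Gm" "dist x g < R" using infdist_lessE[OF sp(1)] by blast
  have "infdist g (frontier cube) \<le> dist g x" using xf by (rule infdist_le)
  then show False using bdist[OF g(1)] g(2) by (simp add: dist_commute)
qed

definition gfun :: "'a set \<Rightarrow> 'a \<Rightarrow> real" where
  "gfun M y = infdist (\<xi> y) (M \<inter> Fh) + dist y (\<xi> y)"

lemma gfun_cont: "Gm \<noteq> {} \<Longrightarrow> continuous_on {y. infdist y Gm < R} (gfun M)"
proof -
  assume ne: "Gm \<noteq> {}"
  note xc = xi_cont[OF ne]
  show ?thesis unfolding gfun_def
    by (rule continuous_on_add[OF continuous_on_infdist[OF xc] continuous_on_dist[OF continuous_on_id xc]])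
qed

lemma open_V: "open {y. infdist y Gm < R}"
  by (intro open_Collect_less continuous_intros)

lemma ball_in_WM:
  assumes "M \<in> Ms" "x \<in> M" "infdist x Gm < R"
  obtains r where "r > 0" "ball x r \<subseteq> {y. infdist y Gm < R} \<inter> M"
proof -
  have "open ({y. infdist y Gm < R} \<inter> M)" using open_V openM[OF assms(1)] by blast
  moreover have "x \<in> {y. infdist y Gm < R} \<inter> M" using assms by simp
  ultimately show ?thesis using that openE by metis
qed

lemma cont_SGnC1:
  assumes M: "M \<in> Ms" "x \<in> M" and xs: "x \<in> SG" and nc: "\<not> CC M x"
  shows "\<exists>d>0. \<forall>y. dist y x < d \<longrightarrow> \<not> (\<exists>M'. CC M' y)"
proof -
  note sp = SG_props[OF xs]
  have ne: "M \<inter> Fh \<noteq> {}" and gx: "gfun M x < 2*h" using nc C1_iff[OF M xs] unfolding gfun_def by auto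
  obtain r where r: "r > 0" "ball x r \<subseteq> {y. infdist y Gm < R} \<inter> M" using ball_in_WM[OF M sp(3)] by blast
  have "x \<in> {y. infdist y Gm < R}" using sp by simp
  then obtain \<delta> where \<delta>: "\<delta> > 0" "\<forall>y\<in>{y. infdist y Gm < R}. dist y x < \<delta> \<longrightarrow> dist (gfun M y) (gfun M x) < 2*h - gfun M x"
    using gfun_cont[OF sp(1), of M] gx unfolding continuous_on_iff by (metis diff_gt_0_iff_gt)
  show ?thesis
  proof (intro exI[of _ "min \<delta> r"] conjI allI impI)
    show "min \<delta> r > 0" using \<delta> r by simp
    fix y assume dy: "dist y x < min \<delta> r"
    show "\<not> (\<exists>M'. CC M' y)"
    proof
      assume "\<exists>M'. CC M' y"
      then obtain M' where c': "CC M' y" by blast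
      have yW: "y \<in> {y. infdist y Gm < R} \<inter> M" using r dy by (auto simp: dist_commute)
      then have c: "CC M y" using C1_in[OF c' M(1)] by simp
      have "gfun M y \<ge> 2*h" using C1_iff[OF M(1) _ C1_facts(3)[OF c]] c ne yW unfolding gfun_def by simp
      moreover have "dist (gfun M y) (gfun M x) < 2*h - gfun M x" using \<delta> yW dy by simp
      ultimately show False by (simp add: dist_real_def)
    qed
  qed
qed

lemma cont_nSG:
  assumes M: "M \<in> Ms" "x \<in> M" and xK: "x \<in> KK" and xs: "x \<notin> SG" and y: "y \<in> KK" "y \<in> M"
  shows "dist (FF (y, 1)) x \<le> 2 * dist y x"
proof (cases "\<exists>M'. CC M' y")
  case True
  then obtain M' where c': "CC M' y" by blast
  have c: "CC M y" using C1_in[OF c' M(1) y(2)] .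
  note cf = C1_facts[OF c]
  have xA: "x \<in> M \<inter> Fh" using KM_Fh[OF xK M xs] M by blast
  then have ne: "M \<inter> Fh \<noteq> {}" by blast
  have "infdist (\<xi> y) (M \<inter> Fh) \<le> dist (\<xi> y) x" using xA by (rule infdist_le)
  also have "\<dots> \<le> dist (\<xi> y) y + dist y x" by (rule dist_triangle)
  finally have i1: "infdist (\<xi> y) (M \<inter> Fh) \<le> dist y (\<xi> y) + dist y x" by (simp add: dist_commute)
  have "cc M y \<ge> 2*h - infdist (\<xi> y) (M \<inter> Fh)" using cf(12)[OF ne] by simp
  then have "dist (FF (y, 1)) y \<le> dist y x" using Phi_dist[OF c] i1 cf(8) by linarith
  moreover have "dist (FF (y, 1)) x \<le> dist (FF (y, 1)) y + dist y x" by (rule dist_triangle)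
  ultimately show ?thesis by linarith
next
  case False then show ?thesis using Fmap_nC1 by simp
qed

lemma cont_C1_allC1:
  assumes c: "CC M x" and nfix: "psi M x \<noteq> x"
  shows "\<exists>d>0. \<forall>y\<in>KK. dist y x < d \<longrightarrow> CC M y"
proof -
  note cf = C1_facts[OF c]
  obtain r where r: "r > 0" "ball x r \<subseteq> {y. infdist y Gm < R} \<inter> M" using ball_in_WM[OF cf(1,2,5)] by blast
  show ?thesis
  proof (cases "M \<inter> Fh = {}")
    case True
    show ?thesis
    proof (intro exI[of _ r] conjI ballI impI)
      show "r > 0" using r by simp
      fix y assume y: "y \<in> KK" "dist y x < r"
      then have yW: "y \<in> M" using r by (auto simp: dist_commute)
      show "CC M y"
      proof (cases "y \<in> SG")
        case True then show ?thesis using C1_iff[OF cf(1) yW True] \<open>M \<inter> Fh = {}\<close> by simp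
      next
        case False
        then have "y \<in> Fh" using KM_Fh[OF y(1) cf(1) yW] by simp
        then show ?thesis using yW \<open>M \<inter> Fh = {}\<close> by blast
      qed
    qed
  next
    case False
    note ne = False
    have gge: "gfun M x \<ge> 2*h" using C1_iff[OF cf(1,2,3)] c ne unfolding gfun_def by simp
    have ceq: "cc M x = max (2*h - infdist (\<xi> x) (M \<inter> Fh)) 0" using cf(12)[OF ne] .
    have ggt: "gfun M x > 2*h"
    proof (rule ccontr)
      assume "\<not> gfun M x > 2*h"
      then have "gfun M x = 2*h" using gge by simp
      then have "cc M x = dist x (\<xi> x)" using ceq cf(7) unfolding gfun_def by simp
      then show False using psi_fix[OF c] nfix by simp
    qed
    have ipos: "infdist x (M \<inter> Fh) > 0"
    proof (rule ccontr)
      assume "\<not> infdist x (M \<inter> Fh) > 0"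
      then have i0: "infdist x (M \<inter> Fh) = 0" using infdist_nonneg[of x "M \<inter> Fh"] by simp
      have "infdist (\<xi> x) (M \<inter> Fh) \<le> infdist x (M \<inter> Fh) + dist (\<xi> x) x" by (rule infdist_triangle)
      then have i1: "infdist (\<xi> x) (M \<inter> Fh) \<le> dist x (\<xi> x)" using i0 by (simp add: dist_commute)
      have "2*h - dist x (\<xi> x) \<le> infdist (\<xi> x) (M \<inter> Fh)" using cf(11)[OF ne] .
      then have "infdist (\<xi> x) (M \<inter> Fh) = h" "dist x (\<xi> x) = h" using i1 cf(8) by linarith+
      then have "cc M x = dist x (\<xi> x)" using ceq hpos by simp
      then show False using psi_fix[OF c] nfix by simp
    qed
    have "x \<in> {y. infdist y Gm < R}" using cf by simp
    then obtain \<delta> where \<delta>: "\<delta> > 0" "\<forall>y\<in>{y. infdist y Gm < R}. dist y x < \<delta> \<longrightarrow> dist (gfun M y) (gfun M x) < gfun M x - 2*h"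
      using gfun_cont[OF cf(4), of M] ggt unfolding continuous_on_iff by (metis diff_gt_0_iff_gt)
    show ?thesis
    proof (intro exI[of _ "min (min \<delta> r) (infdist x (M \<inter> Fh))"] conjI ballI impI)
      show "min (min \<delta> r) (infdist x (M \<inter> Fh)) > 0" using \<delta> r ipos by simp
      fix y assume y: "y \<in> KK" "dist y x < min (min \<delta> r) (infdist x (M \<inter> Fh))"
      then have yW: "y \<in> {y. infdist y Gm < R} \<inter> M" using r by (auto simp: dist_commute)
      have yA: "y \<notin> M \<inter> Fh"
      proof
        assume "y \<in> M \<inter> Fh"
        then have "infdist x (M \<inter> Fh) \<le> dist x y" by (rule infdist_le)
        then show False using y(2) by (simp add: dist_commute)
      qed
      have ySG: "y \<in> SG"
      proof (rule ccontr)
        assume "y \<notin> SG"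
        then have "y \<in> Fh" using KM_Fh[OF y(1) cf(1)] yW by simp
        then show False using yA yW by blast
      qed
      have "dist (gfun M y) (gfun M x) < gfun M x - 2*h" using \<delta> yW y(2) by simp
      then have "gfun M y > 2*h" by (simp add: dist_real_def)
      then show "CC M y" using C1_iff[OF cf(1) _ ySG] yW unfolding gfun_def by simp
    qed
  qed
qed

lemma cont_C1:
  assumes c: "CC M x" and e: "e > 0"
  shows "\<exists>d>0. \<forall>y\<in>KK. dist y x < d \<longrightarrow> dist (FF (y, 1)) (FF (x, 1)) < e"
proof -
  note cf = C1_facts[OF c]
  obtain r where r: "r > 0" "ball x r \<subseteq> {y. infdist y Gm < R} \<inter> M" using ball_in_WM[OF cf(1,2,5)] by blast
  have xW: "x \<in> {y. infdist y Gm < R} \<inter> M" using cf by simp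
  obtain \<delta> where \<delta>: "\<delta> > 0" "\<forall>y\<in>{y. infdist y Gm < R} \<inter> M. dist y x < \<delta> \<longrightarrow> dist (psi M y) (psi M x) < e"
    using psi_cont[OF cf(1,4)] xW e unfolding continuous_on_iff by metis
  have Px: "FF (x, 1) = psi M x" using Phi_C1[OF c] .
  show ?thesis
  proof (cases "psi M x = x")
    case True
    show ?thesis
    proof (intro exI[of _ "min (min \<delta> r) e"] conjI ballI impI)
      show "min (min \<delta> r) e > 0" using \<delta> r e by simp
      fix y assume y: "y \<in> KK" "dist y x < min (min \<delta> r) e"
      then have yW: "y \<in> {y. infdist y Gm < R} \<inter> M" using r by (auto simp: dist_commute)
      show "dist (FF (y, 1)) (FF (x, 1)) < e"
      proof (cases "\<exists>M'. CC M' y")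
        case True
        then obtain M' where "CC M' y" by blast
        then have cy: "CC M y" using C1_in cf(1) yW by blast
        show ?thesis using Phi_C1[OF cy] Px \<delta> yW y(2) by simp
      next
        case False
        then show ?thesis using Fmap_nC1[OF False] Px \<open>psi M x = x\<close> y(2) by simp
      qed
    qed
  next
    case False
    obtain d1 where d1: "d1 > 0" "\<forall>y\<in>KK. dist y x < d1 \<longrightarrow> CC M y" using cont_C1_allC1[OF c False] by blast
    show ?thesis
    proof (intro exI[of _ "min (min \<delta> r) d1"] conjI ballI impI)
      show "min (min \<delta> r) d1 > 0" using \<delta> r d1 by simp
      fix y assume y: "y \<in> KK" "dist y x < min (min \<delta> r) d1"
      then have yW: "y \<in> {y. infdist y Gm < R} \<inter> M" using r by (auto simp: dist_commute)
      have cy: "CC M y" using d1 y by simp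
      show "dist (FF (y, 1)) (FF (x, 1)) < e" using Phi_C1[OF cy] Px \<delta> yW y(2) by simp
    qed
  qed
qed

lemma Phi_cont: "continuous_on KK (\<lambda>y. FF (y, 1))"
  unfolding continuous_on_iff
proof (intro ballI allI impI)
  fix x e assume xK: "x \<in> KK" and e: "(e::real) > 0"
  show "\<exists>d>0. \<forall>y\<in>KK. dist y x < d \<longrightarrow> dist (FF (y, 1)) (FF (x, 1)) < e"
  proof (cases "x \<in> Gm")
    case True
    have Px: "FF (x, 1) = x" using Fmap_nC1 Gm_notin True unfolding C1_def by blast
    show ?thesis
    proof (intro exI[of _ "e/2"] conjI ballI impI)
      show "e/2 > 0" using e by simp
      fix y assume y: "y \<in> KK" "dist y x < e/2"
      then show "dist (FF (y, 1)) (FF (x, 1)) < e" using cont_Gm[OF True y(1)] Px by simp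
    qed
  next
    case xG: False
    show ?thesis
    proof (cases "x \<in> box 0 One")
      case False
      have xc: "x \<in> cube" using KK_cube xK by blast
      have Px: "FF (x, 1) = x" using cont_nbox[OF xc False, of x] Fmap_nC1 hR hpos by simp
      show ?thesis
      proof (intro exI[of _ "min (R - h) e"] conjI ballI impI)
        show "min (R - h) e > 0" using e hR hpos by simp
        fix y assume y: "y \<in> KK" "dist y x < min (R - h) e"
        then have "FF (y, 1) = y" using cont_nbox[OF xc False, of y] Fmap_nC1 by simp
        then show "dist (FF (y, 1)) (FF (x, 1)) < e" using Px y by simp
      qed
    next
      case True
      then obtain M where M: "M \<in> Ms" "x \<in> M" using box_cover xG by blast
      obtain r where r: "r > 0" "ball x r \<subseteq> M" using openE[OF openM[OF M(1)] M(2)] by blast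
      show ?thesis
      proof (cases "CC M x")
        case True then show ?thesis using cont_C1 e by blast
      next
        case nc: False
        then have nc': "\<not> (\<exists>M'. CC M' x)" using C1_in M by blast
        have Px: "FF (x, 1) = x" using Fmap_nC1[OF nc'] .
        show ?thesis
        proof (cases "x \<in> SG")
          case True
          obtain d where d: "d > 0" "\<forall>y. dist y x < d \<longrightarrow> \<not> (\<exists>M'. CC M' y)" using cont_SGnC1[OF M True nc] by blast
          show ?thesis
          proof (intro exI[of _ "min d e"] conjI ballI impI)
            show "min d e > 0" using d e by simp
            fix y assume y: "y \<in> KK" "dist y x < min d e"
            then have "FF (y, 1) = y" using d Fmap_nC1 by simp
            then show "dist (FF (y, 1)) (FF (x, 1)) < e" using Px y by simp
          qed
        next
          case False
          show ?thesis
          proof (intro exI[of _ "min r (e/2)"] conjI ballI impI)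
            show "min r (e/2) > 0" using r e by simp
            fix y assume y: "y \<in> KK" "dist y x < min r (e/2)"
            then have yM: "y \<in> M" using r by (auto simp: dist_commute)
            have "dist (FF (y, 1)) x \<le> 2 * dist y x" using cont_nSG[OF M xK False y(1) yM] .
            then show "dist (FF (y, 1)) (FF (x, 1)) < e" using Px y by simp
          qed
        qed
      qed
    qed
  qed
qed

lemma F_lin: "FF (x, t) = (1 - t) *\<^sub>R x + t *\<^sub>R FF (x, 1)"
proof (cases "\<exists>M. CC M x")
  case True
  then obtain M where c: "CC M x" by blast
  define q where "q = cc M x / dist x (\<xi> x)"
  have e1: "FF (x, t) = \<xi> x + ((1 - t) + t * q) *\<^sub>R (x - \<xi> x)" using Fmap_C1'[OF c, of t] unfolding q_def .
  have e2: "FF (x, 1) = \<xi> x + q *\<^sub>R (x - \<xi> x)" using Fmap_C1'[OF c, of 1] unfolding q_def by simp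
  have aux: "\<And>b::'a. b + ((1 - t) + t * q) *\<^sub>R (x - b) = (1 - t) *\<^sub>R x + t *\<^sub>R (b + q *\<^sub>R (x - b))"
    by (simp add: algebra_simps)
  show ?thesis unfolding e1 e2 by (rule aux)
next
  case False then show ?thesis using Fmap_nC1[OF False] by (simp add: algebra_simps)
qed

lemma P5: "deformation_retraction KK GG FF"
  unfolding deformation_retraction_def
proof (intro conjI ballI)
  show "GG \<subseteq> KK" unfolding Gset_def using F_in_K[of _ 1] by auto
  have eq: "\<forall>p\<in>KK \<times> {0..1}. FF p = (1 - snd p) *\<^sub>R fst p + snd p *\<^sub>R FF (fst p, 1)"
    using F_lin by (metis prod.collapse)
  have c1: "continuous_on (KK \<times> {0..1}) (\<lambda>p. FF (fst p, 1))"
    by (rule continuous_on_compose2[OF Phi_cont continuous_on_fst]) auto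
  have "continuous_on (KK \<times> {0..1}) (\<lambda>p. (1 - snd p) *\<^sub>R fst p + snd p *\<^sub>R FF (fst p, 1))"
    by (intro continuous_on_add continuous_on_scaleR continuous_on_diff continuous_on_const continuous_on_snd continuous_on_fst continuous_on_id c1)
  moreover have "continuous_on (KK \<times> {0..1}) FF \<longleftrightarrow> continuous_on (KK \<times> {0..1}) (\<lambda>p. (1 - snd p) *\<^sub>R fst p + snd p *\<^sub>R FF (fst p, 1))"
    by (rule continuous_on_cong[OF refl]) (use eq in blast)
  ultimately show "continuous_on (KK \<times> {0..1}) FF" by simp
  show "FF ` (KK \<times> {0..1}) \<subseteq> KK" using F_in_K by auto
  fix x assume "x \<in> KK"
  then show "FF (x, 0) = x" "FF (x, 1) \<in> GG" using F0 unfolding Gset_def by auto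
next
  fix a assume "a \<in> GG"
  then show "FF (a, 1) = a" by (rule idem)
qed

end

theorem lemma2:
  fixes f :: "'a::euclidean_space \<Rightarrow> real" and Ms :: "'a set set"
    and Mb L \<alpha> R h lam :: real
  assumes "in_S f Ms Mb L \<alpha> R"
    and "0 < h" and "h < R / 2"
  shows "deformation_retraction (Kset f Ms L \<alpha> lam h) (Gset f Ms L \<alpha> lam h) (Fmap f Ms L \<alpha> lam h)
    \<and> thick (sublevel f lam) h \<subseteq> Kset f Ms L \<alpha> lam h
    \<and> Kset f Ms L \<alpha> lam h \<subseteq> thick (sublevel f lam) (2 * h)
    \<and> sublevel f lam \<subseteq> Gset f Ms L \<alpha> lam h
    \<and> Gset f Ms L \<alpha> lam h \<subseteq> sublevel f (lam + L * (1 + 3 powr \<alpha>) * h powr \<alpha>)"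
proof -
  interpret setting f Ms Mb L \<alpha> R h lam using assms by unfold_locales
  show ?thesis using P1 P2 P3 P4 P5 by blast
qed

end
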